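(* Under the standing assumptions below, the dual value function $D$ belongs to $\mathcal N$, and $D$ is the largest fixed point of the Bellman operator $\mathcal B$ in $\mathcal N$.
   Context: Setup. Let $\mathcal S$ be a finite set and $(s_t)_{t\ge0}$ a Markov chain on $\mathcal S$ with transition probabilities $\pi(s'|s)>0$ for all $s,s'\in\mathcal S$; for $s^t=(s_0,\dots,s_t)\in\mathcal S^{t+1}$ write $\pi^t(s^t|s_0)$ for its probability given $s_0$ and $\mathbb E_{s_t}$ for expectation over future shocks given $s^t$; $\mathbb E_s$ denotes expectation over $s'\sim\pi(\cdot|s)$. Let $\mathcal A\subset\mathbb R^n$ be a finite set, $\mathcal X\subseteq\mathbb R^m$ a countable set, $\zeta:\mathcal X\times\mathcal A\times\mathcal S\to\mathcal X$, $p:\mathcal X\times\mathcal A\times\mathcal S\to\mathbb R$, $r,g^1,\dots,g^I$ bounded real functions on $\mathcal X\times\mathcal A\times\mathcal S$, $\bar g^i\in\mathbb R$, $\beta\in(0,1)$. A plan is $a=(a(s^t))_{t,s^t}$, $a(s^t)\in\mathcal A$, inducing $x(s^0)=x_0$, $x(s^{t+1})=\zeta(x(s^t),a(s^t),s_t)$. $\tilde{\mathcal A}(x,s)=\{a\in\mathcal A:p(x,a,s)\ge0\}$; $\tilde{\mathcal A}^\infty(x_0)$ is the set of plans with $a(s^t)\in\tilde{\mathcal A}(x(s^t),s_t)$ for all $t,s^t$. A plan is feasible for $(x_0,s_0)$ if it lies in $\tilde{\mathcal A}^\infty(x_0)$ and $\mathbb E_{s_t}\sum_{n\ge0}\beta^ng^i(x(s^{t+n}),a(s^{t+n}),s_{t+n})\ge\bar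 g^i$ for all $t,s^t,i$. Standing assumption: for every $(x_0,s_0)$ a feasible plan exists. Pre-action histories $h^t=(s_0,a_0,\dots,s_{t-1},a_{t-1},s_t)\in\mathcal H^t=\mathcal S^{t+1}\times\mathcal A^t$; a plan generates $h^t=(s_0,a(s^0),\dots,a(s^{t-1}),s_t)$ along $s^t$. Dual value: $\Lambda$ is the set of $(\lambda^i(h^t))_{t,h^t,i}$, $\lambda^i(h^t)\ge0$, $\sum_t\sum_{h^t}\sum_i\beta^t\lambda^i(h^t)\pi^t(s^t|s_0)<\infty$. $L(a,\lambda;\gamma,x_0,s_0)=\mathbb E_{s_0}\sum_t\beta^t\big[r(x(s^t),a(s^t),s_t)+\sum_i\gamma^ig^i(x(s^t),a(s^t),s_t)+\sum_i\lambda^i(h^t)(\sum_{n\ge0}\beta^ng^i(x(s^{t+n}),a(s^{t+n}),s_{t+n})-\bar g^i)\big]$ and $D(\gamma,x_0,s_0)=\inf_{\lambda\in\Lambda}\sup_{a\in\tilde{\mathcal A}^\infty(x_0)}L$, for $\gamma\in\mathbb R^I_+$. Function spaces. $L=(\|r\|_\infty+\sum_i\|g^i\|_\infty)/(1-\beta)$ (a constant), $B(k)=\{\gamma\in\mathbb R^I_+:\|\gamma\|_\infty\le k\}$, $\mathcal S=\{s_1,\dots,s_{|\mathcal S|}\}$, $\mathcal X=\{x_1,x_2,\dots\}$. $\mathcal M$: functions $F:\mathbb R^I_+\times\mathcal X\times\mathcal S\to\mathbb R$ with $F(\cdot,x,s)\in L^\infty(B(k))$ for all $k$ and $\|F\|_{\mathcal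 M}=\sum_i2^{-i}\sum_j2^{-j}\sum_{k\ge1}2^{-k}\|F(\cdot,x_j,s_i)\|_{L^\infty(B(k))}<\infty$. $\mathcal N$: those $F\in\mathcal M$ with, for all $x,s$, (i) $F(\cdot,x,s)$ convex; (ii) $|F(\gamma_1,x,s)-F(\gamma_2,x,s)|\le L\|\gamma_1-\gamma_2\|_1$; (iii) $F(\gamma,x,s)\ge v^0+\sum_i\gamma^iv^i$ for every feasible plan for $(x,s)$, $v^0=\mathbb E_s\sum_t\beta^tr(\cdot)$, $v^i=\mathbb E_s\sum_t\beta^tg^i(\cdot)$; (iv) $F(\gamma,x,s)\le(1+\sum_i\gamma^i)L$. Bellman operator: $\mathcal B(F)(\gamma,x,s)=\inf_{\lambda\in\mathbb R^I_+}\sup_{a\in\tilde{\mathcal A}(x,s)}\big[r(x,a,s)+\sum_i(\gamma^ig^i(x,a,s)+\lambda^i(g^i(x,a,s)-\bar g^i))+\beta\mathbb E_sF(\gamma+\lambda,\zeta(x,a,s),s')\big]$. *)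

theory Defs
  imports "HOL-Analysis.Analysis"
begin

text \<open>The primitive data of the dynamic problem.  Types: 'x = points of X (a subset of R^m),
'a = actions (elements of R^n), 's = shocks (finite type), 'i = index set of the I
constraints (finite type).\<close>

record ('x, 'a, 's, 'i) model =
  trP   :: "'s \<Rightarrow> 's \<Rightarrow> real"          (* trP s s' = pi(s'|s) *)
  Act   :: "'a set"
  Xs    :: "'x set"
  zeta  :: "'x \<Rightarrow> 'a \<Rightarrow> 's \<Rightarrow> 'x"
  pcon  :: "'x \<Rightarrow> 'a \<Rightarrow> 's \<Rightarrow> real"
  rew   :: "'x \<Rightarrow> 'a \<Rightarrow> 's \<Rightarrow> real"
  gcon  :: "'i \<Rightarrow> 'x \<Rightarrow> 'a \<Rightarrow> 's \<Rightarrow> real"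
  gbar  :: "'i \<Rightarrow> real"
  disc  :: real

fun pathprob :: "('s \<Rightarrow> 's \<Rightarrow> real) \<Rightarrow> 's \<Rightarrow> 's list \<Rightarrow> real" where
  "pathprob Q s [] = 1"
| "pathprob Q s (y # ys) = Q s y * pathprob Q y ys"

text \<open>Histories s^t are nonempty lists [s_0,...,s_t]; plans are maps from histories to actions.
 xk z a x0 hs k = x(s^k) for s^k = take (k+1) hs.\<close>
fun xk :: "('x \<Rightarrow> 'a \<Rightarrow> 's \<Rightarrow> 'x) \<Rightarrow> ('s list \<Rightarrow> 'a) \<Rightarrow> 'x \<Rightarrow> 's list \<Rightarrow> nat \<Rightarrow> 'x" where
  "xk z a x0 hs 0 = x0"
| "xk z a x0 hs (Suc k) = z (xk z a x0 hs k) (a (take (Suc k) hs)) (hs ! k)"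

definition xpath :: "('x,'a,'s,'i) model \<Rightarrow> ('s list \<Rightarrow> 'a) \<Rightarrow> 'x \<Rightarrow> 's list \<Rightarrow> 'x" where
  "xpath M a x0 hs = xk (zeta M) a x0 hs (length hs - 1)"

definition stg :: "('x,'a,'s,'i) model \<Rightarrow> ('x \<Rightarrow> 'a \<Rightarrow> 's \<Rightarrow> real) \<Rightarrow> ('s list \<Rightarrow> 'a) \<Rightarrow> 'x
    \<Rightarrow> 's list \<Rightarrow> real" where
  "stg M h a x0 hs = h (xpath M a x0 hs) (a hs) (last hs)"

definition condsum :: "('x,'a,'s::finite,'i) model \<Rightarrow> 's list \<Rightarrow> ('s list \<Rightarrow> real) \<Rightarrow> real" where
  "condsum M hs f = (\<Sum>n. disc M ^ n *
      (\<Sum>ys\<in>{ys::'s list. length ys = n}. pathprob (trP M) (last hs) ys * f (hs @ ys)))"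

definition adm :: "('x,'a,'s,'i) model \<Rightarrow> 'x \<Rightarrow> ('s list \<Rightarrow> 'a) \<Rightarrow> bool" where
  "adm M x0 a \<longleftrightarrow> (\<forall>hs. hs \<noteq> [] \<longrightarrow>
      a hs \<in> Act M \<and> pcon M (xpath M a x0 hs) (a hs) (last hs) \<ge> 0)"

definition feasible :: "('x,'a,'s::finite,'i) model \<Rightarrow> 'x \<Rightarrow> 's \<Rightarrow> ('s list \<Rightarrow> 'a) \<Rightarrow> bool" where
  "feasible M x0 s0 a \<longleftrightarrow> adm M x0 a \<and>
     (\<forall>hs i. hs \<noteq> [] \<and> hd hs = s0 \<longrightarrow> condsum M hs (stg M (gcon M i) a x0) \<ge> gbar M i)"

text \<open>Pre-action histories h^t = (s_0,a_0,...,s_{t-1},a_{t-1},s_t), represented as the pair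
 ([s_0,...,s_t], [a_0,...,a_{t-1}]).\<close>
definition Hset :: "('x,'a,'s,'i) model \<Rightarrow> nat \<Rightarrow> ('s list \<times> 'a list) set" where
  "Hset M t = {(ss, as). length ss = Suc t \<and> length as = t \<and> set as \<subseteq> Act M}"

definition hist_of :: "('s list \<Rightarrow> 'a) \<Rightarrow> 's list \<Rightarrow> 's list \<times> 'a list" where
  "hist_of a hs = (hs, map (\<lambda>k. a (take (Suc k) hs)) [0..<length hs - 1])"

definition pit :: "('x,'a,'s,'i) model \<Rightarrow> 's \<Rightarrow> 's list \<Rightarrow> real" where
  "pit M s0 ss = (if ss \<noteq> [] \<and> hd ss = s0 then pathprob (trP M) s0 (tl ss) else 0)"

definition Lambda :: "('x,'a,'s::finite,'i::finite) model \<Rightarrow> 's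
    \<Rightarrow> (('s list \<times> 'a list) \<Rightarrow> 'i \<Rightarrow> real) set" where
  "Lambda M s0 = {lam. (\<forall>h i. lam h i \<ge> 0) \<and>
      summable (\<lambda>t. \<Sum>h\<in>Hset M t. \<Sum>i\<in>UNIV. disc M ^ t * lam h i * pit M s0 (fst h))}"

definition Lag :: "('x,'a,'s::finite,'i::finite) model \<Rightarrow> ('s list \<Rightarrow> 'a)
    \<Rightarrow> (('s list \<times> 'a list) \<Rightarrow> 'i \<Rightarrow> real) \<Rightarrow> real^'i \<Rightarrow> 'x \<Rightarrow> 's \<Rightarrow> real" where
  "Lag M a lam \<gamma> x0 s0 = (\<Sum>t. disc M ^ t *
     (\<Sum>ys\<in>{ys::'s list. length ys = t}. pathprob (trP M) s0 ys *
        (stg M (rew M) a x0 (s0 # ys)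
         + (\<Sum>i\<in>UNIV. \<gamma> $ i * stg M (gcon M i) a x0 (s0 # ys))
         + (\<Sum>i\<in>UNIV. lam (hist_of a (s0 # ys)) i *
              (condsum M (s0 # ys) (stg M (gcon M i) a x0) - gbar M i)))))"

definition Dval :: "('x,'a,'s::finite,'i::finite) model \<Rightarrow> real^'i \<Rightarrow> 'x \<Rightarrow> 's \<Rightarrow> real" where
  "Dval M \<gamma> x0 s0 = (INF lam\<in>Lambda M s0. SUP a\<in>{a. adm M x0 a}. Lag M a lam \<gamma> x0 s0)"

definition Pos :: "(real^'i) set" where
  "Pos = {\<gamma>. \<forall>i. 0 \<le> \<gamma> $ i}"

definition Bk :: "nat \<Rightarrow> (real^'i) set" where
  "Bk k = {\<gamma>\<in>Pos. \<forall>i. \<gamma> $ i \<le> real k}"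

definition supnorm :: "('x,'a,'s,'i) model \<Rightarrow> ('x \<Rightarrow> 'a \<Rightarrow> 's \<Rightarrow> real) \<Rightarrow> real" where
  "supnorm M h = (SUP z\<in>Xs M \<times> Act M \<times> UNIV. \<bar>h (fst z) (fst (snd z)) (snd (snd z))\<bar>)"

definition Lconst :: "('x,'a,'s,'i::finite) model \<Rightarrow> real" where
  "Lconst M = (supnorm M (rew M) + (\<Sum>i\<in>UNIV. supnorm M (gcon M i))) / (1 - disc M)"

definition normk :: "(real^'i \<Rightarrow> 'x \<Rightarrow> 's \<Rightarrow> real) \<Rightarrow> 'x \<Rightarrow> 's \<Rightarrow> nat \<Rightarrow> real" where
  "normk F x s k = (SUP \<gamma>\<in>Bk k. \<bar>F \<gamma> x s\<bar>)"

text \<open>Membership in the space M (with respect to the enumeration x_j = the point with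
 index xidx x_j = j of X): the weighted norm is finite.\<close>
definition inM :: "('x,'a,'s,'i::finite) model \<Rightarrow> ('x \<Rightarrow> nat)
    \<Rightarrow> (real^'i \<Rightarrow> 'x \<Rightarrow> 's \<Rightarrow> real) \<Rightarrow> bool" where
  "inM M xidx F \<longleftrightarrow>
     (\<forall>x\<in>Xs M. \<forall>s. \<forall>k\<ge>1. bounded ((\<lambda>\<gamma>. F \<gamma> x s) ` Bk k)) \<and>
     (\<forall>x\<in>Xs M. \<forall>s. summable (\<lambda>k. (1/2) ^ Suc k * normk F x s (Suc k))) \<and>
     (\<forall>s. (\<lambda>x. (1/2) ^ xidx x * (\<Sum>k. (1/2) ^ Suc k * normk F x s (Suc k))) summable_on Xs M)"

definition inN :: "('x,'a,'s::finite,'i::finite) model \<Rightarrow> ('x \<Rightarrow> nat)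
    \<Rightarrow> (real^'i \<Rightarrow> 'x \<Rightarrow> 's \<Rightarrow> real) \<Rightarrow> bool" where
  "inN M xidx F \<longleftrightarrow> inM M xidx F \<and>
     (\<forall>x\<in>Xs M. \<forall>s.
        convex_on Pos (\<lambda>\<gamma>. F \<gamma> x s) \<and>
        (\<forall>\<gamma>1\<in>Pos. \<forall>\<gamma>2\<in>Pos. \<bar>F \<gamma>1 x s - F \<gamma>2 x s\<bar> \<le> Lconst M * (\<Sum>i\<in>UNIV. \<bar>\<gamma>1 $ i - \<gamma>2 $ i\<bar>)) \<and>
        (\<forall>a. feasible M x s a \<longrightarrow> (\<forall>\<gamma>\<in>Pos.
            F \<gamma> x s \<ge> condsum M [s] (stg M (rew M) a x)
                      + (\<Sum>i\<in>UNIV. \<gamma> $ i * condsum M [s] (stg M (gcon M i) a x)))) \<and>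
        (\<forall>\<gamma>\<in>Pos. F \<gamma> x s \<le> (1 + (\<Sum>i\<in>UNIV. \<gamma> $ i)) * Lconst M))"

definition Bell :: "('x,'a,'s::finite,'i::finite) model \<Rightarrow> (real^'i \<Rightarrow> 'x \<Rightarrow> 's \<Rightarrow> real)
    \<Rightarrow> real^'i \<Rightarrow> 'x \<Rightarrow> 's \<Rightarrow> real" where
  "Bell M F \<gamma> x s = (INF lam\<in>Pos. SUP a\<in>{a\<in>Act M. pcon M x a s \<ge> 0}.
      rew M x a s
      + (\<Sum>i\<in>UNIV. \<gamma> $ i * gcon M i x a s + lam $ i * (gcon M i x a s - gbar M i))
      + disc M * (\<Sum>s'\<in>UNIV. trP M s s' * F (\<gamma> + lam) (zeta M x a s) s'))"

end

theory Submission
  imports Defs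
begin

lemma lists_Suc_eq:
  "{ys::'s list. length ys = Suc n} = (\<lambda>(y,ys). y # ys) ` (UNIV \<times> {ys. length ys = n})"
  by (auto simp: length_Suc_conv image_def)

lemma finite_lists_len: "finite {ys::'s::finite list. length ys = n}"
  using finite_lists_length_eq[of "UNIV::'s set" n] by simp

locale ctx =
  fixes M :: "('x,'a,'s::finite,'i::finite) model"
  assumes tpos: "\<And>s s'. trP M s s' > 0"
    and tsum: "\<And>s. (\<Sum>s'\<in>UNIV. trP M s s') = 1"
    and finA: "finite (Act M)"
    and zX: "\<And>x a s. x \<in> Xs M \<Longrightarrow> a \<in> Act M \<Longrightarrow> zeta M x a s \<in> Xs M"
    and bndr: "\<exists>C. \<forall>x\<in>Xs M. \<forall>a\<in>Act M. \<forall>s. \<bar>rew M x a s\<bar> \<le> C"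
    and bndg: "\<forall>i. \<exists>C. \<forall>x\<in>Xs M. \<forall>a\<in>Act M. \<forall>s. \<bar>gcon M i x a s\<bar> \<le> C"
    and b0: "0 < disc M" and b1: "disc M < 1"
    and feas: "\<And>x s. x \<in> Xs M \<Longrightarrow> \<exists>a. feasible M x s a"
begin

abbreviation "\<beta> \<equiv> disc M"
abbreviation "Q \<equiv> trP M"

definition ES :: "'s \<Rightarrow> nat \<Rightarrow> ('s list \<Rightarrow> real) \<Rightarrow> real" where
  "ES s n \<phi> = (\<Sum>ys\<in>{ys::'s list. length ys = n}. pathprob Q s ys * \<phi> ys)"

definition ser :: "'s \<Rightarrow> ('s list \<Rightarrow> real) \<Rightarrow> real" where
  "ser s \<phi> = (\<Sum>n. \<beta> ^ n * ES s n \<phi>)"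

definition ok :: "'s \<Rightarrow> ('s list \<Rightarrow> real) \<Rightarrow> bool" where
  "ok s \<phi> \<longleftrightarrow> summable (\<lambda>n. \<beta> ^ n * ES s n (\<lambda>ys. \<bar>\<phi> ys\<bar>))"

lemma pathprob_pos: "pathprob Q s ys > 0"
  by (induction ys arbitrary: s) (auto simp: tpos)

lemma pathprob_nn: "pathprob Q s ys \<ge> 0"
  using pathprob_pos less_imp_le by blast

lemma ES_0: "ES s 0 \<phi> = \<phi> []"
  by (simp add: ES_def)

lemma ES_Suc: "ES s (Suc n) \<phi> = (\<Sum>s1\<in>UNIV. Q s s1 * ES s1 n (\<lambda>ys. \<phi> (s1 # ys)))"
proof -
  have inj: "inj_on (\<lambda>(y,ys). y # ys) (UNIV \<times> {ys::'s list. length ys = n})"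
    by (auto simp: inj_on_def)
  have "ES s (Suc n) \<phi> = (\<Sum>p\<in>UNIV \<times> {ys::'s list. length ys = n}.
      pathprob Q s (fst p # snd p) * \<phi> (fst p # snd p))"
    unfolding ES_def lists_Suc_eq by (subst sum.reindex[OF inj]) (simp add: case_prod_beta comp_def)
  also have "\<dots> = (\<Sum>s1\<in>UNIV. \<Sum>ys\<in>{ys::'s list. length ys = n}.
      pathprob Q s (s1 # ys) * \<phi> (s1 # ys))"
    by (simp only: sum.cartesian_product) (simp add: case_prod_beta)
  also have "\<dots> = (\<Sum>s1\<in>UNIV. Q s s1 * ES s1 n (\<lambda>ys. \<phi> (s1 # ys)))"
    by (simp add: ES_def sum_distrib_left mult.assoc)
  finally show ?thesis .
qed

lemma ES_const: "ES s n (\<lambda>_. c) = c"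
proof (induction n arbitrary: s)
  case 0 then show ?case by (simp add: ES_0)
next
  case (Suc n) then show ?case by (simp add: ES_Suc sum_distrib_right[symmetric] tsum)
qed

lemma ES_mono: "(\<And>ys. \<phi> ys \<le> \<psi> ys) \<Longrightarrow> ES s n \<phi> \<le> ES s n \<psi>"
  unfolding ES_def by (rule sum_mono) (simp add: mult_left_mono pathprob_nn)

lemma ES_add: "ES s n (\<lambda>ys. \<phi> ys + \<psi> ys) = ES s n \<phi> + ES s n \<psi>"
  unfolding ES_def by (simp add: distrib_left sum.distrib)

lemma ES_cmult: "ES s n (\<lambda>ys. c * \<phi> ys) = c * ES s n \<phi>"
  unfolding ES_def by (simp add: sum_distrib_left mult_ac)

lemma ES_sum: "ES s n (\<lambda>ys. \<Sum>i\<in>I. \<phi> i ys) = (\<Sum>i\<in>I. ES s n (\<phi> i))"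
  unfolding ES_def by (simp add: sum_distrib_left sum.swap[of _ I])

lemma ES_abs: "\<bar>ES s n \<phi>\<bar> \<le> ES s n (\<lambda>ys. \<bar>\<phi> ys\<bar>)"
  unfolding ES_def
  by (rule order_trans[OF sum_abs]) (simp add: abs_mult pathprob_nn)

lemma ES_nn: "(\<And>ys. 0 \<le> \<phi> ys) \<Longrightarrow> 0 \<le> ES s n \<phi>"
  using ES_mono[of "\<lambda>_. 0" \<phi>] by (simp add: ES_const)

lemma ES_le_const: "(\<And>ys. \<phi> ys \<le> C) \<Longrightarrow> ES s n \<phi> \<le> C"
  using ES_mono[of \<phi> "\<lambda>_. C"] by (simp add: ES_const)

lemma ES_cong: "(\<And>ys. length ys = n \<Longrightarrow> \<phi> ys = \<psi> ys) \<Longrightarrow> ES s n \<phi> = ES s n \<psi>"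
  unfolding ES_def by (rule sum.cong) auto

lemma geom_summable: "summable (\<lambda>n. \<beta> ^ n)"
  using b0 b1 by (intro summable_geometric) simp

lemma ok_summable: "ok s \<phi> \<Longrightarrow> summable (\<lambda>n. \<beta> ^ n * ES s n \<phi>)"
  unfolding ok_def
  by (rule summable_comparison_test'[where N=0]) (use b0 ES_abs in \<open>auto simp: abs_mult intro!: mult_left_mono\<close>)

lemma ok_bound: "(\<And>ys. \<bar>\<phi> ys\<bar> \<le> C) \<Longrightarrow> ok s \<phi>"
  unfolding ok_def
proof (rule summable_comparison_test'[where N=0])
  assume "\<And>ys. \<bar>\<phi> ys\<bar> \<le> C"
  then show "norm (\<beta> ^ n * ES s n (\<lambda>ys. \<bar>\<phi> ys\<bar>)) \<le> C * \<beta> ^ n" for n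
    using b0 ES_le_const[of "\<lambda>ys. \<bar>\<phi> ys\<bar>" C s n] ES_nn[of "\<lambda>ys. \<bar>\<phi> ys\<bar>" s n]
    by (simp add: abs_mult mult.commute mult_left_mono)
qed (intro summable_mult geom_summable)

lemma ok_le: "ok s \<psi> \<Longrightarrow> (\<And>ys. \<bar>\<phi> ys\<bar> \<le> \<bar>\<psi> ys\<bar>) \<Longrightarrow> ok s \<phi>"
  unfolding ok_def
  apply (erule summable_comparison_test'[where N=0])
  using b0 ES_mono[of "\<lambda>ys. \<bar>\<phi> ys\<bar>" "\<lambda>ys. \<bar>\<psi> ys\<bar>"] ES_nn[of "\<lambda>ys. \<bar>\<phi> ys\<bar>"]
  by (simp add: abs_mult mult_left_mono)

lemma ok_add: assumes "ok s \<phi>" "ok s \<psi>" shows "ok s (\<lambda>ys. \<phi> ys + \<psi> ys)"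
  unfolding ok_def
proof (rule summable_comparison_test'[where N=0])
  show "summable (\<lambda>n. \<beta> ^ n * ES s n (\<lambda>ys. \<bar>\<phi> ys\<bar>) + \<beta> ^ n * ES s n (\<lambda>ys. \<bar>\<psi> ys\<bar>))"
    using assms unfolding ok_def by (rule summable_add)
  fix n
  have "ES s n (\<lambda>ys. \<bar>\<phi> ys + \<psi> ys\<bar>) \<le> ES s n (\<lambda>ys. \<bar>\<phi> ys\<bar> + \<bar>\<psi> ys\<bar>)"
    by (rule ES_mono) simp
  then have "\<beta> ^ n * ES s n (\<lambda>ys. \<bar>\<phi> ys + \<psi> ys\<bar>) \<le> \<beta> ^ n * ES s n (\<lambda>ys. \<bar>\<phi> ys\<bar>) + \<beta> ^ n * ES s n (\<lambda>ys. \<bar>\<psi> ys\<bar>)"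
    using b0 by (simp add: ES_add distrib_left[symmetric] mult_left_mono)
  then show "norm (\<beta> ^ n * ES s n (\<lambda>ys. \<bar>\<phi> ys + \<psi> ys\<bar>)) \<le> \<beta> ^ n * ES s n (\<lambda>ys. \<bar>\<phi> ys\<bar>) + \<beta> ^ n * ES s n (\<lambda>ys. \<bar>\<psi> ys\<bar>)"
    using b0 ES_nn[of "\<lambda>ys. \<bar>\<phi> ys + \<psi> ys\<bar>" s n] by (simp add: abs_mult)
qed

lemma ok_cmult: "ok s \<phi> \<Longrightarrow> ok s (\<lambda>ys. c * \<phi> ys)"
  unfolding ok_def
  by (drule summable_mult[where c="\<bar>c\<bar>"]) (simp add: abs_mult ES_cmult mult_ac)

lemma ok_sum: "finite I \<Longrightarrow> (\<And>i. i \<in> I \<Longrightarrow> ok s (\<phi> i)) \<Longrightarrow> ok s (\<lambda>ys. \<Sum>i\<in>I. \<phi> i ys)"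
proof (induction I rule: finite_induct)
  case empty then show ?case by (simp add: ok_bound[where C=0])
next
  case (insert x F) then show ?case by (simp add: ok_add)
qed

lemma ok_shift: assumes "ok s \<phi>" shows "ok s1 (\<lambda>ys. \<phi> (s1 # ys))"
proof -
  have sm: "summable (\<lambda>n. \<beta> ^ Suc n * ES s (Suc n) (\<lambda>ys. \<bar>\<phi> ys\<bar>))"
    using assms unfolding ok_def by (subst summable_Suc_iff)
  have "summable (\<lambda>n. (1 / (\<beta> * Q s s1)) * (\<beta> ^ Suc n * ES s (Suc n) (\<lambda>ys. \<bar>\<phi> ys\<bar>)))"
    by (rule summable_mult[OF sm])
  then show ?thesis unfolding ok_def
  proof (rule summable_comparison_test'[where N=0])
    fix n
    have nn: "\<And>s'. 0 \<le> Q s s' * ES s' n (\<lambda>ys. \<bar>\<phi> (s' # ys)\<bar>)"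
      using tpos ES_nn by (simp add: less_imp_le)
    have "Q s s1 * ES s1 n (\<lambda>ys. \<bar>\<phi> (s1 # ys)\<bar>) \<le> ES s (Suc n) (\<lambda>ys. \<bar>\<phi> ys\<bar>)"
      unfolding ES_Suc by (rule member_le_sum[where f="\<lambda>s'. Q s s' * ES s' n (\<lambda>ys. \<bar>\<phi> (s' # ys)\<bar>)"])
        (use nn in auto)
    then have h1: "ES s1 n (\<lambda>ys. \<bar>\<phi> (s1 # ys)\<bar>) \<le> ES s (Suc n) (\<lambda>ys. \<bar>\<phi> ys\<bar>) / Q s s1"
      using tpos[of s s1] by (simp add: field_simps)
    have "\<beta> ^ n * ES s1 n (\<lambda>ys. \<bar>\<phi> (s1 # ys)\<bar>) \<le> \<beta> ^ n * (ES s (Suc n) (\<lambda>ys. \<bar>\<phi> ys\<bar>) / Q s s1)"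
      using mult_left_mono[OF h1, of "\<beta> ^ n"] b0 by simp
    also have "\<dots> = (1 / (\<beta> * Q s s1)) * (\<beta> ^ Suc n * ES s (Suc n) (\<lambda>ys. \<bar>\<phi> ys\<bar>))"
      using b0 tpos[of s s1] by (simp add: field_simps)
    finally show "norm (\<beta> ^ n * ES s1 n (\<lambda>ys. \<bar>\<phi> (s1 # ys)\<bar>)) \<le> (1 / (\<beta> * Q s s1)) * (\<beta> ^ Suc n * ES s (Suc n) (\<lambda>ys. \<bar>\<phi> ys\<bar>))"
      using b0 ES_nn[of "\<lambda>ys. \<bar>\<phi> (s1 # ys)\<bar>" s1 n] by (simp add: abs_mult)
  qed
qed

lemma ser_add: "ok s \<phi> \<Longrightarrow> ok s \<psi> \<Longrightarrow> ser s (\<lambda>ys. \<phi> ys + \<psi> ys) = ser s \<phi> + ser s \<psi>"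
  unfolding ser_def ES_add distrib_left
  by (intro suminf_add[symmetric] ok_summable)

lemma ser_cmult: "ok s \<phi> \<Longrightarrow> ser s (\<lambda>ys. c * \<phi> ys) = c * ser s \<phi>"
  unfolding ser_def ES_cmult
  by (simp add: mult.left_commute suminf_mult ok_summable)

lemma ser_sum: "finite I \<Longrightarrow> (\<And>i. i \<in> I \<Longrightarrow> ok s (\<phi> i)) \<Longrightarrow>
    ser s (\<lambda>ys. \<Sum>i\<in>I. \<phi> i ys) = (\<Sum>i\<in>I. ser s (\<phi> i))"
  unfolding ser_def ES_sum sum_distrib_left
  by (intro suminf_sum ok_summable)

lemma ser_mono: "ok s \<phi> \<Longrightarrow> ok s \<psi> \<Longrightarrow> (\<And>ys. \<phi> ys \<le> \<psi> ys) \<Longrightarrow> ser s \<phi> \<le> ser s \<psi>"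
  unfolding ser_def
  using b0 by (intro suminf_le ok_summable mult_left_mono ES_mono) auto

lemma ser_const: "ser s (\<lambda>_. c) = c / (1 - \<beta>)"
proof -
  have "(\<Sum>n. \<beta> ^ n) = 1 / (1 - \<beta>)" using b0 b1 by (intro suminf_geometric) simp
  then show ?thesis unfolding ser_def ES_const
    by (subst suminf_mult2[symmetric, OF geom_summable]) simp
qed

lemma ser_bound: "(\<And>ys. \<bar>\<phi> ys\<bar> \<le> C) \<Longrightarrow> \<bar>ser s \<phi>\<bar> \<le> C / (1 - \<beta>)"
proof -
  assume h: "\<And>ys. \<bar>\<phi> ys\<bar> \<le> C"
  have "ser s \<phi> \<le> ser s (\<lambda>_. C)"
    by (rule ser_mono) (use h abs_le_D1 in \<open>auto intro: ok_bound\<close>)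
  moreover have "ser s (\<lambda>ys. -1 * \<phi> ys) \<le> ser s (\<lambda>_. C)"
  proof (rule ser_mono)
    show "ok s (\<lambda>ys. -1 * \<phi> ys)" by (rule ok_bound[where C=C]) (use h in auto)
    show "ok s (\<lambda>ys. C)" by (rule ok_bound[where C="\<bar>C\<bar>"]) auto
    show "-1 * \<phi> ys \<le> C" for ys using h[of ys] by auto
  qed
  moreover have "ok s \<phi>" by (rule ok_bound[OF h])
  ultimately show ?thesis using ser_cmult[of s \<phi> "-1"] unfolding ser_const by auto
qed

lemma ser_rec: assumes "ok s \<phi>"
  shows "ser s \<phi> = \<phi> [] + \<beta> * (\<Sum>s1\<in>UNIV. Q s s1 * ser s1 (\<lambda>ys. \<phi> (s1 # ys)))"
proof -
  have sm: "summable (\<lambda>n. \<beta> ^ n * ES s n \<phi>)" using ok_summable[OF assms] .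
  have "ser s \<phi> = (\<Sum>n. \<beta> ^ Suc n * ES s (Suc n) \<phi>) + \<phi> []"
    unfolding ser_def using suminf_split_head[OF sm] by (simp add: ES_0)
  also have "(\<Sum>n. \<beta> ^ Suc n * ES s (Suc n) \<phi>) =
      (\<Sum>n. \<Sum>s1\<in>UNIV. (\<beta> * Q s s1) * (\<beta> ^ n * ES s1 n (\<lambda>ys. \<phi> (s1 # ys))))"
    unfolding ES_Suc by (simp add: sum_distrib_left mult_ac)
  also have "\<dots> = (\<Sum>s1\<in>UNIV. \<Sum>n. (\<beta> * Q s s1) * (\<beta> ^ n * ES s1 n (\<lambda>ys. \<phi> (s1 # ys))))"
    by (rule suminf_sum) (intro summable_mult ok_summable ok_shift[OF assms])
  also have "\<dots> = (\<Sum>s1\<in>UNIV. (\<beta> * Q s s1) * ser s1 (\<lambda>ys. \<phi> (s1 # ys)))"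
    unfolding ser_def by (intro sum.cong refl suminf_mult ok_summable ok_shift[OF assms])
  finally show ?thesis by (simp add: sum_distrib_left mult_ac)
qed

end

lemma xk_shift: "xk z a x0 (s0 # hs) (Suc k) = xk z (\<lambda>h. a (s0 # h)) (z x0 (a [s0]) s0) hs k"
  by (induction k) auto

lemma xk_cong: "hs \<noteq> [] \<Longrightarrow> (\<And>h. h \<noteq> [] \<Longrightarrow> hd h = hd hs \<Longrightarrow> a h = b h) \<Longrightarrow>
    xk z a x hs k = xk z b x hs k"
proof (induction k)
  case (Suc k)
  have "take (Suc k) hs \<noteq> []" "hd (take (Suc k) hs) = hd hs" using Suc.prems(1)
    by (auto simp: hd_take neq_Nil_conv)
  then show ?case using Suc by simp
qed simp

context ctx begin

definition ash :: "('s list \<Rightarrow> 'a) \<Rightarrow> 's \<Rightarrow> 's list \<Rightarrow> 'a" where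
  "ash a s0 = (\<lambda>h. a (s0 # h))"

definition Vr where "Vr a x s = condsum M [s] (stg M (rew M) a x)"
definition Vg where "Vg i a x s = condsum M [s] (stg M (gcon M i) a x)"
definition Cr where "Cr = supnorm M (rew M)"
definition Cg where "Cg i = supnorm M (gcon M i)"
definition Aset where "Aset x s = {a\<in>Act M. pcon M x a s \<ge> 0}"

lemma xpath_single[simp]: "xpath M a x0 [s] = x0"
  by (simp add: xpath_def)

lemma xpath_shift: "hs \<noteq> [] \<Longrightarrow>
    xpath M a x0 (s0 # hs) = xpath M (ash a s0) (zeta M x0 (a [s0]) s0) hs"
proof -
  assume "hs \<noteq> []"
  then have "length (s0 # hs) - 1 = Suc (length hs - 1)" by (cases hs) auto
  then show ?thesis unfolding xpath_def ash_def by (simp only: xk_shift)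
qed

lemma xk_Xs: "adm M x0 a \<Longrightarrow> x0 \<in> Xs M \<Longrightarrow> hs \<noteq> [] \<Longrightarrow> xk (zeta M) a x0 hs k \<in> Xs M"
proof (induction k)
  case (Suc k)
  have "take (Suc k) hs \<noteq> []" using Suc.prems(3) by (auto simp: neq_Nil_conv)
  then have "a (take (Suc k) hs) \<in> Act M" using Suc.prems(1) unfolding adm_def by blast
  then show ?case using Suc zX by simp
qed simp

lemma xpath_Xs: "adm M x0 a \<Longrightarrow> x0 \<in> Xs M \<Longrightarrow> hs \<noteq> [] \<Longrightarrow> xpath M a x0 hs \<in> Xs M"
  unfolding xpath_def by (rule xk_Xs)

lemma xpath_cong: "hs \<noteq> [] \<Longrightarrow> (\<And>h. h \<noteq> [] \<Longrightarrow> hd h = hd hs \<Longrightarrow> a h = b h) \<Longrightarrow>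
    xpath M a x hs = xpath M b x hs"
  unfolding xpath_def by (rule xk_cong)

lemma stg_shift: "hs \<noteq> [] \<Longrightarrow>
    stg M h a x0 (s0 # hs) = stg M h (ash a s0) (zeta M x0 (a [s0]) s0) hs"
  unfolding stg_def by (simp add: xpath_shift ash_def)

lemma stg_cong: "hs \<noteq> [] \<Longrightarrow> (\<And>h. h \<noteq> [] \<Longrightarrow> hd h = hd hs \<Longrightarrow> a h = b h) \<Longrightarrow>
    stg M f a x hs = stg M f b x hs"
  unfolding stg_def using xpath_cong[of hs a b x] by simp

lemma supnorm_ge:
  assumes "\<exists>C. \<forall>x\<in>Xs M. \<forall>a\<in>Act M. \<forall>s. \<bar>h x a s\<bar> \<le> C" "x \<in> Xs M" "a \<in> Act M"
  shows "\<bar>h x a s\<bar> \<le> supnorm M h"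
proof -
  obtain C where C: "\<forall>x\<in>Xs M. \<forall>a\<in>Act M. \<forall>s. \<bar>h x a s\<bar> \<le> C" using assms(1) by blast
  have "bdd_above ((\<lambda>z. \<bar>h (fst z) (fst (snd z)) (snd (snd z))\<bar>) ` (Xs M \<times> Act M \<times> UNIV))"
    using C by (intro bdd_aboveI[where M=C]) auto
  then show ?thesis unfolding supnorm_def
    using cSUP_upper[of "(x, a, s)" "Xs M \<times> Act M \<times> UNIV"
        "\<lambda>z. \<bar>h (fst z) (fst (snd z)) (snd (snd z))\<bar>"] assms(2,3) by simp
qed

lemma adm_act: "adm M x0 a \<Longrightarrow> hs \<noteq> [] \<Longrightarrow> a hs \<in> Act M"
  unfolding adm_def by blast

lemma stg_bound_gen:
  assumes "\<exists>C. \<forall>x\<in>Xs M. \<forall>a\<in>Act M. \<forall>s. \<bar>h x a s\<bar> \<le> C" "adm M x0 a" "x0 \<in> Xs M" "hs \<noteq> []"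
  shows "\<bar>stg M h a x0 hs\<bar> \<le> supnorm M h"
  unfolding stg_def using assms by (intro supnorm_ge xpath_Xs adm_act) auto

lemma stg_bound_r: "adm M x0 a \<Longrightarrow> x0 \<in> Xs M \<Longrightarrow> hs \<noteq> [] \<Longrightarrow> \<bar>stg M (rew M) a x0 hs\<bar> \<le> Cr"
  unfolding Cr_def by (rule stg_bound_gen[OF bndr])

lemma stg_bound_g: "adm M x0 a \<Longrightarrow> x0 \<in> Xs M \<Longrightarrow> hs \<noteq> [] \<Longrightarrow> \<bar>stg M (gcon M i) a x0 hs\<bar> \<le> Cg i"
  unfolding Cg_def by (rule stg_bound_gen) (use bndg in auto)

lemma condsum_ser: "condsum M hs f = ser (last hs) (\<lambda>ys. f (hs @ ys))"
  unfolding condsum_def ser_def ES_def ..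

lemma condsum_shift: "hs \<noteq> [] \<Longrightarrow>
    condsum M (s0 # hs) (stg M h a x0) = condsum M hs (stg M h (ash a s0) (zeta M x0 (a [s0]) s0))"
  unfolding condsum_ser by (simp add: stg_shift)

lemma condsum_cong: "hs \<noteq> [] \<Longrightarrow> (\<And>h. h \<noteq> [] \<Longrightarrow> hd h = hd hs \<Longrightarrow> a h = b h) \<Longrightarrow>
    condsum M hs (stg M f a x) = condsum M hs (stg M f b x)"
  unfolding condsum_ser by (intro arg_cong[where f="ser _"] ext stg_cong) auto

lemma condsum_bound_gen: "(\<And>hs. hs \<noteq> [] \<Longrightarrow> \<bar>stg M h a x0 hs\<bar> \<le> C) \<Longrightarrow> hs \<noteq> [] \<Longrightarrow>
   \<bar>condsum M hs (stg M h a x0)\<bar> \<le> C / (1 - \<beta>)"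
  unfolding condsum_ser by (rule ser_bound) auto

lemma condsum_bound_g: "adm M x0 a \<Longrightarrow> x0 \<in> Xs M \<Longrightarrow> hs \<noteq> [] \<Longrightarrow>
    \<bar>condsum M hs (stg M (gcon M i) a x0)\<bar> \<le> Cg i / (1 - \<beta>)"
  by (rule condsum_bound_gen) (rule stg_bound_g)

lemma condsum_bound_r: "adm M x0 a \<Longrightarrow> x0 \<in> Xs M \<Longrightarrow> hs \<noteq> [] \<Longrightarrow>
    \<bar>condsum M hs (stg M (rew M) a x0)\<bar> \<le> Cr / (1 - \<beta>)"
  by (rule condsum_bound_gen) (rule stg_bound_r)

lemma condsum_rec_gen:
  assumes "\<And>hs. hs \<noteq> [] \<Longrightarrow> \<bar>stg M h a x0 hs\<bar> \<le> C"
  shows "condsum M [s0] (stg M h a x0) = h x0 (a [s0]) s0 +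
     \<beta> * (\<Sum>s1\<in>UNIV. Q s0 s1 * condsum M [s1] (stg M h (ash a s0) (zeta M x0 (a [s0]) s0)))"
proof -
  have ok: "ok s0 (\<lambda>ys. stg M h a x0 ([s0] @ ys))"
    by (rule ok_bound[where C=C]) (use assms in auto)
  have e: "\<And>s1 ys. stg M h a x0 ([s0] @ s1 # ys) = stg M h (ash a s0) (zeta M x0 (a [s0]) s0) ([s1] @ ys)"
    by (simp add: stg_shift)
  have e0: "stg M h a x0 ([s0] @ []) = h x0 (a [s0]) s0" by (simp add: stg_def)
  show ?thesis
    unfolding condsum_ser using ser_rec[OF ok] by (simp only: e e0 last.simps if_True simp_thms)

qed

lemma Vr_rec: "adm M x0 a \<Longrightarrow> x0 \<in> Xs M \<Longrightarrow> Vr a x0 s0 = rew M x0 (a [s0]) s0 +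
     \<beta> * (\<Sum>s1\<in>UNIV. Q s0 s1 * Vr (ash a s0) (zeta M x0 (a [s0]) s0) s1)"
  unfolding Vr_def by (rule condsum_rec_gen) (rule stg_bound_r)

lemma Vg_rec: "adm M x0 a \<Longrightarrow> x0 \<in> Xs M \<Longrightarrow> Vg i a x0 s0 = gcon M i x0 (a [s0]) s0 +
     \<beta> * (\<Sum>s1\<in>UNIV. Q s0 s1 * Vg i (ash a s0) (zeta M x0 (a [s0]) s0) s1)"
  unfolding Vg_def by (rule condsum_rec_gen) (rule stg_bound_g)

lemma adm_shift: assumes "adm M x0 a"
  shows "adm M (zeta M x0 (a [s0]) s0) (ash a s0)"
  unfolding adm_def
proof (intro allI impI)
  fix hs :: "'s list" assume "hs \<noteq> []"
  then have "s0 # hs \<noteq> []" "last (s0 # hs) = last hs" by auto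
  then show "ash a s0 hs \<in> Act M \<and> 0 \<le> pcon M (xpath M (ash a s0) (zeta M x0 (a [s0]) s0) hs) (ash a s0 hs) (last hs)"
  proof -
    have "a (s0 # hs) \<in> Act M \<and> 0 \<le> pcon M (xpath M a x0 (s0 # hs)) (a (s0 # hs)) (last (s0 # hs))"
      using assms unfolding adm_def by blast
    then show ?thesis using xpath_shift[OF \<open>hs \<noteq> []\<close>, of a x0 s0] \<open>hs \<noteq> []\<close> by (simp add: ash_def)
  qed
qed

lemma feasible_shift: assumes "feasible M x0 s0 a"
  shows "feasible M (zeta M x0 (a [s0]) s0) s1 (ash a s0)"
  unfolding feasible_def
proof (intro conjI allI impI)
  show "adm M (zeta M x0 (a [s0]) s0) (ash a s0)"
    using assms adm_shift unfolding feasible_def by blast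
  fix hs i assume h: "hs \<noteq> [] \<and> hd hs = s1"
  have "gbar M i \<le> condsum M (s0 # hs) (stg M (gcon M i) a x0)"
    using assms unfolding feasible_def by auto
  then show "gbar M i \<le> condsum M hs (stg M (gcon M i) (ash a s0) (zeta M x0 (a [s0]) s0))"
    using condsum_shift h by simp
qed

lemma adm_Aset: "adm M x0 a \<Longrightarrow> a [s0] \<in> Aset x0 s0"
  unfolding adm_def Aset_def
  by (erule allE[where x="[s0]"]) simp

lemma Aset_finite: "finite (Aset x s)"
  unfolding Aset_def using finA by simp

lemma feas_adm: "x \<in> Xs M \<Longrightarrow> \<exists>a. adm M x a"
  using feas unfolding feasible_def by blast

lemma Aset_ne: "x \<in> Xs M \<Longrightarrow> Aset x s \<noteq> {}"
  using feas_adm adm_Aset by blast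

lemma Cr_nn: assumes "x \<in> Xs M" shows "0 \<le> Cr"
proof -
  obtain a where "a \<in> Aset x undefined" using Aset_ne[OF assms] by blast
  then have "a \<in> Act M" unfolding Aset_def by simp
  from supnorm_ge[OF bndr assms this] show ?thesis unfolding Cr_def by (rule order_trans[rotated]) simp
qed

lemma Cg_nn: assumes "x \<in> Xs M" shows "0 \<le> Cg i"
proof -
  obtain a where "a \<in> Aset x undefined" using Aset_ne[OF assms] by blast
  then have "a \<in> Act M" unfolding Aset_def by simp
  have "\<bar>gcon M i x a undefined\<bar> \<le> supnorm M (gcon M i)"
    by (rule supnorm_ge) (use bndg assms \<open>a \<in> Act M\<close> in auto)
  then show ?thesis unfolding Cg_def by (rule order_trans[rotated]) simp
qed

end

lemma sum_img_le:
  fixes G :: "'b \<Rightarrow> real"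
  assumes "inj_on g A" "g ` A \<subseteq> B" "finite B" "\<And>x. x \<in> B \<Longrightarrow> 0 \<le> G x"
  shows "(\<Sum>a\<in>A. G (g a)) \<le> (\<Sum>x\<in>B. G x)"
proof -
  have "(\<Sum>a\<in>A. G (g a)) = (\<Sum>x\<in>g ` A. G x)" by (simp add: sum.reindex[OF assms(1)])
  also have "\<dots> \<le> (\<Sum>x\<in>B. G x)" by (rule sum_mono2) (use assms in auto)
  finally show ?thesis .
qed

context ctx begin

definition T :: "nat \<Rightarrow> (('s list \<times> 'a list) \<Rightarrow> 'i \<Rightarrow> real) \<Rightarrow> 's \<Rightarrow> real" where
  "T t lam s = (\<Sum>h\<in>Hset M t. \<Sum>i\<in>UNIV. \<beta> ^ t * lam h i * pit M s (fst h))"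

definition lsh :: "(('s list \<times> 'a list) \<Rightarrow> 'i \<Rightarrow> real) \<Rightarrow> 's \<Rightarrow> 'a \<Rightarrow> ('s list \<times> 'a list) \<Rightarrow> 'i \<Rightarrow> real" where
  "lsh lam s0 a0 = (\<lambda>h i. lam (s0 # fst h, a0 # snd h) i)"

definition lam0 :: "(('s list \<times> 'a list) \<Rightarrow> 'i \<Rightarrow> real) \<Rightarrow> 's \<Rightarrow> real^'i" where
  "lam0 lam s0 = (\<chi> i. lam ([s0], []) i)"

definition phiP where
  "phiP a lam x0 s0 = (\<lambda>ys. \<Sum>i\<in>UNIV. lam (hist_of a (s0 # ys)) i *
      (condsum M (s0 # ys) (stg M (gcon M i) a x0) - gbar M i))"

definition PP where "PP a lam x0 s0 = ser s0 (phiP a lam x0 s0)"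

definition Kc where "Kc = (\<Sum>i\<in>UNIV. Cg i / (1 - \<beta>) + \<bar>gbar M i\<bar>)"

definition nnl :: "(('s list \<times> 'a list) \<Rightarrow> 'i \<Rightarrow> real) \<Rightarrow> bool" where
  "nnl lam \<longleftrightarrow> (\<forall>h i. 0 \<le> lam h i)"

lemma nnlD: "nnl lam \<Longrightarrow> 0 \<le> lam h i"
  by (unfold nnl_def) blast

lemma Lambda_iff: "lam \<in> Lambda M s \<longleftrightarrow> nnl lam \<and> summable (\<lambda>t. T t lam s)"
  unfolding Lambda_def T_def nnl_def by (simp add: mult.assoc)

lemma finite_Hset: "finite (Hset M t)"
proof -
  have "Hset M t \<subseteq> {ss::'s list. length ss = Suc t} \<times> {as. set as \<subseteq> Act M \<and> length as = t}"
    unfolding Hset_def by auto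
  moreover have "finite ({ss::'s list. length ss = Suc t} \<times> {as. set as \<subseteq> Act M \<and> length as = t})"
    using finite_lists_len finite_lists_length_eq[OF finA] by blast
  ultimately show ?thesis by (rule finite_subset)
qed

lemma pit_nn: "0 \<le> pit M s ss"
  unfolding pit_def using pathprob_nn by simp

lemma pit_cons[simp]: "pit M s0 (s0 # ys) = pathprob Q s0 ys"
  unfolding pit_def by simp

lemma pit_sum: "ss \<noteq> [] \<Longrightarrow> (\<Sum>s1\<in>UNIV. Q s0 s1 * pit M s1 ss) = pit M s0 (s0 # ss)"
proof -
  assume "ss \<noteq> []"
  then obtain y ys where ss: "ss = y # ys" by (cases ss) auto
  have "(\<Sum>s1\<in>UNIV. Q s0 s1 * pit M s1 ss) = (\<Sum>s1\<in>UNIV. if y = s1 then Q s0 s1 * pathprob Q y ys else 0)"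
    unfolding pit_def ss by (intro sum.cong) auto
  also have "\<dots> = Q s0 y * pathprob Q y ys" by (simp add: sum.delta)
  finally show ?thesis using ss by simp
qed

lemma T_nn: assumes "nnl lam" shows "0 \<le> T t lam s"
  unfolding T_def using b0 pit_nn nnlD[OF assms]
  by (intro sum_nonneg mult_nonneg_nonneg) auto

lemma hist_of_fst[simp]: "fst (hist_of a hs) = hs"
  by (simp add: hist_of_def)

lemma hist_of_single[simp]: "hist_of a [s0] = ([s0], [])"
  by (simp add: hist_of_def)

lemma hist_of_in: "adm M x0 a \<Longrightarrow> hist_of a (s0 # ys) \<in> Hset M (length ys)"
  unfolding hist_of_def Hset_def using adm_act by auto

lemma hist_of_shift: assumes "hs \<noteq> []"
  shows "hist_of a (s0 # hs) = (s0 # hs, a [s0] # snd (hist_of (ash a s0) hs))"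
proof -
  obtain m where m: "length hs = Suc m" using assms by (cases hs) auto
  have "[0..<Suc m] = 0 # map Suc [0..<m]" by (simp add: upt_conv_Cons map_Suc_upt)
  then show ?thesis unfolding hist_of_def ash_def using m by simp
qed

lemma hist_of_cong: "hs \<noteq> [] \<Longrightarrow> (\<And>h. h \<noteq> [] \<Longrightarrow> hd h = hd hs \<Longrightarrow> a h = b h) \<Longrightarrow>
    hist_of a hs = hist_of b hs"
  unfolding hist_of_def
  by (auto simp: hd_take neq_Nil_conv intro!: map_cong)

lemma ES_lam_le_T:
  assumes "adm M x0 a" "nnl lam"
  shows "\<beta> ^ t * ES s0 t (\<lambda>ys. \<Sum>i\<in>UNIV. lam (hist_of a (s0 # ys)) i) \<le> T t lam s0"
proof -
  let ?G = "\<lambda>h. \<Sum>i\<in>UNIV. \<beta> ^ t * lam h i * pit M s0 (fst h)"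
  have "\<beta> ^ t * ES s0 t (\<lambda>ys. \<Sum>i\<in>UNIV. lam (hist_of a (s0 # ys)) i) =
      (\<Sum>ys\<in>{ys. length ys = t}. ?G (hist_of a (s0 # ys)))"
    unfolding ES_def by (simp add: sum_distrib_left sum_distrib_right mult_ac)
  also have "\<dots> \<le> (\<Sum>h\<in>Hset M t. ?G h)"
  proof (rule sum_img_le)
    show "inj_on (\<lambda>ys. hist_of a (s0 # ys)) {ys. length ys = t}"
      by (rule inj_onI) (metis hist_of_fst list.inject)
    show "(\<lambda>ys. hist_of a (s0 # ys)) ` {ys. length ys = t} \<subseteq> Hset M t"
      using hist_of_in[OF assms(1)] by auto
    show "finite (Hset M t)" by (rule finite_Hset)
    show "0 \<le> ?G h" for h using nnlD[OF assms(2)] b0 pit_nn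
      by (intro sum_nonneg mult_nonneg_nonneg) auto
  qed
  finally show ?thesis unfolding T_def .
qed

lemma Kc_ge: "x0 \<in> Xs M \<Longrightarrow> Cg i / (1 - \<beta>) + \<bar>gbar M i\<bar> \<le> Kc"
  unfolding Kc_def
  by (rule member_le_sum[where f="\<lambda>i. Cg i / (1 - \<beta>) + \<bar>gbar M i\<bar>"])
     (use Cg_nn b1 in auto)

lemma phiP_bound:
  assumes "adm M x0 a" "x0 \<in> Xs M" "nnl lam"
  shows "\<bar>phiP a lam x0 s0 ys\<bar> \<le> Kc * (\<Sum>i\<in>UNIV. lam (hist_of a (s0 # ys)) i)"
proof -
  have "\<bar>phiP a lam x0 s0 ys\<bar> \<le> (\<Sum>i\<in>UNIV. \<bar>lam (hist_of a (s0 # ys)) i *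
      (condsum M (s0 # ys) (stg M (gcon M i) a x0) - gbar M i)\<bar>)"
    unfolding phiP_def by (rule sum_abs)
  also have "\<dots> \<le> (\<Sum>i\<in>UNIV. Kc * lam (hist_of a (s0 # ys)) i)"
  proof (rule sum_mono)
    fix i
    have cb: "\<bar>condsum M (s0 # ys) (stg M (gcon M i) a x0)\<bar> \<le> Cg i / (1 - \<beta>)"
      by (rule condsum_bound_g[OF assms(1,2)]) simp
    have "\<bar>condsum M (s0 # ys) (stg M (gcon M i) a x0) - gbar M i\<bar> \<le> Cg i / (1 - \<beta>) + \<bar>gbar M i\<bar>"
      using cb by (smt (verit))
    also have "\<dots> \<le> Kc" by (rule Kc_ge[OF assms(2)])
    finally have ck: "\<bar>condsum M (s0 # ys) (stg M (gcon M i) a x0) - gbar M i\<bar> \<le> Kc" .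
    have "lam (hist_of a (s0 # ys)) i * \<bar>condsum M (s0 # ys) (stg M (gcon M i) a x0) - gbar M i\<bar>
          \<le> lam (hist_of a (s0 # ys)) i * Kc"
      by (rule mult_left_mono[OF ck nnlD[OF assms(3)]])
    then show "\<bar>lam (hist_of a (s0 # ys)) i * (condsum M (s0 # ys) (stg M (gcon M i) a x0) - gbar M i)\<bar>
        \<le> Kc * lam (hist_of a (s0 # ys)) i"
      by (simp add: abs_mult nnlD[OF assms(3)] mult.commute)
  qed
  finally show ?thesis by (simp add: sum_distrib_left)
qed

lemma Kc_nn: "x0 \<in> Xs M \<Longrightarrow> 0 \<le> Kc"
  using Kc_ge[of x0 undefined] Cg_nn[of x0 undefined] b1 by (smt (verit) divide_nonneg_pos)

lemma ok_phiP:
  assumes "adm M x0 a" "x0 \<in> Xs M" "lam \<in> Lambda M s0"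
  shows "ok s0 (phiP a lam x0 s0)"
proof -
  have nn: "nnl lam" and sm: "summable (\<lambda>t. T t lam s0)" using assms(3) Lambda_iff by auto
  show ?thesis unfolding ok_def
  proof (rule summable_comparison_test'[where N=0])
    show "summable (\<lambda>t. Kc * T t lam s0)" by (rule summable_mult[OF sm])
    fix n
    have "ES s0 n (\<lambda>ys. \<bar>phiP a lam x0 s0 ys\<bar>) \<le> ES s0 n (\<lambda>ys. Kc * (\<Sum>i\<in>UNIV. lam (hist_of a (s0 # ys)) i))"
      by (rule ES_mono) (rule phiP_bound[OF assms(1,2) nn])
    then have "\<beta> ^ n * ES s0 n (\<lambda>ys. \<bar>phiP a lam x0 s0 ys\<bar>) \<le> Kc * (\<beta> ^ n * ES s0 n (\<lambda>ys. (\<Sum>i\<in>UNIV. lam (hist_of a (s0 # ys)) i)))"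
      using b0 by (simp add: ES_cmult mult_left_mono mult.left_commute)
    also have "\<dots> \<le> Kc * T n lam s0"
      by (rule mult_left_mono[OF ES_lam_le_T[OF assms(1) nn] Kc_nn[OF assms(2)]])
    finally show "norm (\<beta> ^ n * ES s0 n (\<lambda>ys. \<bar>phiP a lam x0 s0 ys\<bar>)) \<le> Kc * T n lam s0"
      using b0 ES_nn[of "\<lambda>ys. \<bar>phiP a lam x0 s0 ys\<bar>" s0 n] by (simp add: abs_mult)
  qed
qed

lemma Lag_split:
  assumes "adm M x0 a" "x0 \<in> Xs M" "lam \<in> Lambda M s0"
  shows "Lag M a lam \<gamma> x0 s0 = Vr a x0 s0 + (\<Sum>i\<in>UNIV. \<gamma> $ i * Vg i a x0 s0) + PP a lam x0 s0"
proof -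
  let ?A = "\<lambda>ys. stg M (rew M) a x0 (s0 # ys)"
  let ?B = "\<lambda>i ys. \<gamma> $ i * stg M (gcon M i) a x0 (s0 # ys)"
  have okA: "ok s0 ?A" by (rule ok_bound[where C=Cr]) (rule stg_bound_r[OF assms(1,2)], simp)
  have okB: "ok s0 (?B i)" for i
    by (rule ok_cmult, rule ok_bound[where C="Cg i"]) (rule stg_bound_g[OF assms(1,2)], simp)
  have okP: "ok s0 (phiP a lam x0 s0)" by (rule ok_phiP[OF assms])
  have "Lag M a lam \<gamma> x0 s0 = ser s0 (\<lambda>ys. (?A ys + (\<Sum>i\<in>UNIV. ?B i ys)) + phiP a lam x0 s0 ys)"
    unfolding Lag_def ser_def ES_def phiP_def ..
  also have "\<dots> = ser s0 (\<lambda>ys. ?A ys + (\<Sum>i\<in>UNIV. ?B i ys)) + PP a lam x0 s0"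
    unfolding PP_def by (rule ser_add) (auto intro!: ok_add ok_sum okA okB okP)
  also have "ser s0 (\<lambda>ys. ?A ys + (\<Sum>i\<in>UNIV. ?B i ys)) = ser s0 ?A + ser s0 (\<lambda>ys. \<Sum>i\<in>UNIV. ?B i ys)"
    by (rule ser_add) (auto intro!: ok_sum okA okB)
  also have "ser s0 (\<lambda>ys. \<Sum>i\<in>UNIV. ?B i ys) = (\<Sum>i\<in>UNIV. ser s0 (?B i))"
    by (rule ser_sum) (auto intro!: okB)
  also have "ser s0 ?A = Vr a x0 s0" unfolding Vr_def condsum_ser by simp
  also have "(\<Sum>i\<in>UNIV. ser s0 (?B i)) = (\<Sum>i\<in>UNIV. \<gamma> $ i * Vg i a x0 s0)"
    unfolding Vg_def condsum_ser
    by (intro sum.cong refl, subst ser_cmult) (auto intro!: ok_bound[where C="Cg _"] stg_bound_g[OF assms(1,2)])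
  finally show ?thesis .
qed

lemma ser_nn: "ok s \<phi> \<Longrightarrow> (\<And>ys. 0 \<le> \<phi> ys) \<Longrightarrow> 0 \<le> ser s \<phi>"
  using ser_mono[of s "\<lambda>_. 0" \<phi>] ser_const[of s 0] ok_bound[of "\<lambda>_. 0" 0] by simp

lemma PP_nn:
  assumes "feasible M x0 s0 a" "x0 \<in> Xs M" "lam \<in> Lambda M s0"
  shows "0 \<le> PP a lam x0 s0"
  unfolding PP_def
proof (rule ser_nn)
  show "ok s0 (phiP a lam x0 s0)" using assms ok_phiP unfolding feasible_def by blast
  fix ys
  show "0 \<le> phiP a lam x0 s0 ys" unfolding phiP_def
  proof (intro sum_nonneg mult_nonneg_nonneg)
    fix i
    show "0 \<le> lam (hist_of a (s0 # ys)) i" using assms(3) unfolding Lambda_iff by (auto intro: nnlD)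
    show "0 \<le> condsum M (s0 # ys) (stg M (gcon M i) a x0) - gbar M i"
      using assms(1) unfolding feasible_def by auto
  qed
qed

lemma PP_upper:
  assumes "adm M x0 a" "x0 \<in> Xs M" "lam \<in> Lambda M s0"
  shows "PP a lam x0 s0 \<le> Kc * (\<Sum>t. T t lam s0)"
proof -
  have nn: "nnl lam" and sm: "summable (\<lambda>t. T t lam s0)" using assms(3) Lambda_iff by auto
  have "PP a lam x0 s0 \<le> (\<Sum>t. Kc * T t lam s0)"
    unfolding PP_def ser_def
  proof (rule suminf_le)
    fix n
    have "ES s0 n (phiP a lam x0 s0) \<le> ES s0 n (\<lambda>ys. Kc * (\<Sum>i\<in>UNIV. lam (hist_of a (s0 # ys)) i))"
      by (rule ES_mono) (use phiP_bound[OF assms(1,2) nn] in \<open>simp add: abs_le_iff\<close>)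
    then have "\<beta> ^ n * ES s0 n (phiP a lam x0 s0) \<le> Kc * (\<beta> ^ n * ES s0 n (\<lambda>ys. (\<Sum>i\<in>UNIV. lam (hist_of a (s0 # ys)) i)))"
      using b0 by (simp add: ES_cmult mult_left_mono mult.left_commute)
    also have "\<dots> \<le> Kc * T n lam s0"
      by (rule mult_left_mono[OF ES_lam_le_T[OF assms(1) nn] Kc_nn[OF assms(2)]])
    finally show "\<beta> ^ n * ES s0 n (phiP a lam x0 s0) \<le> Kc * T n lam s0" .
  qed (use ok_summable[OF ok_phiP[OF assms]] summable_mult[OF sm] in auto)
  then show ?thesis using suminf_mult[OF sm] by simp
qed

lemma Lambda_zero: "(\<lambda>_ _. 0) \<in> Lambda M s"
  unfolding Lambda_iff nnl_def T_def by simp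

lemma PP_zero: "PP a (\<lambda>_ _. 0) x0 s0 = 0"
  unfolding PP_def phiP_def using ser_const[of s0 0] by simp

lemma Lambda_comb:
  assumes "l1 \<in> Lambda M s" "l2 \<in> Lambda M s" "0 \<le> u" "0 \<le> v"
  shows "(\<lambda>h i. u * l1 h i + v * l2 h i) \<in> Lambda M s"
proof -
  have "T t (\<lambda>h i. u * l1 h i + v * l2 h i) s = u * T t l1 s + v * T t l2 s" for t
    unfolding T_def by (simp add: sum_distrib_left sum.distrib algebra_simps)
  then show ?thesis using assms unfolding Lambda_iff nnl_def
    by (auto intro!: summable_add summable_mult)
qed

lemma PP_lin:
  assumes "adm M x0 a" "x0 \<in> Xs M" "l1 \<in> Lambda M s0" "l2 \<in> Lambda M s0"
  shows "PP a (\<lambda>h i. u * l1 h i + v * l2 h i) x0 s0 = u * PP a l1 x0 s0 + v * PP a l2 x0 s0"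
proof -
  have "phiP a (\<lambda>h i. u * l1 h i + v * l2 h i) x0 s0 ys = u * phiP a l1 x0 s0 ys + v * phiP a l2 x0 s0 ys" for ys
    unfolding phiP_def sum_distrib_left sum.distrib[symmetric] by (rule sum.cong) (auto simp: algebra_simps)
  then have "phiP a (\<lambda>h i. u * l1 h i + v * l2 h i) x0 s0 = (\<lambda>ys. u * phiP a l1 x0 s0 ys + v * phiP a l2 x0 s0 ys)"
    by (intro ext)
  then show ?thesis unfolding PP_def
    using ok_phiP[OF assms(1,2,3)] ok_phiP[OF assms(1,2,4)]
    by (simp add: ser_add ok_cmult ser_cmult)
qed

lemma T_shift:
  assumes "nnl lam" "a0 \<in> Act M"
  shows "\<beta> * (\<Sum>s1\<in>UNIV. Q s0 s1 * T t (lsh lam s0 a0) s1) \<le> T (Suc t) lam s0"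
proof -
  let ?G = "\<lambda>h. \<Sum>i\<in>UNIV. \<beta> ^ Suc t * lam h i * pit M s0 (fst h)"
  let ?f = "\<lambda>h::('s list \<times> 'a list). (s0 # fst h, a0 # snd h)"
  have "\<beta> * (\<Sum>s1\<in>UNIV. Q s0 s1 * T t (lsh lam s0 a0) s1) =
     (\<Sum>h\<in>Hset M t. \<Sum>i\<in>UNIV. \<beta> ^ Suc t * lam (?f h) i * (\<Sum>s1\<in>UNIV. Q s0 s1 * pit M s1 (fst h)))"
  proof -
    have "\<beta> * (\<Sum>s1\<in>UNIV. Q s0 s1 * T t (lsh lam s0 a0) s1) =
      (\<Sum>s1\<in>UNIV. \<Sum>h\<in>Hset M t. \<Sum>i\<in>UNIV. \<beta> * Q s0 s1 * (\<beta> ^ t * lam (?f h) i * pit M s1 (fst h)))"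
      unfolding T_def lsh_def by (simp add: sum_distrib_left mult.assoc)
    also have "\<dots> = (\<Sum>h\<in>Hset M t. \<Sum>s1\<in>UNIV. \<Sum>i\<in>UNIV. \<beta> * Q s0 s1 * (\<beta> ^ t * lam (?f h) i * pit M s1 (fst h)))"
      by (rule sum.swap)
    also have "\<dots> = (\<Sum>h\<in>Hset M t. \<Sum>i\<in>UNIV. \<Sum>s1\<in>UNIV. \<beta> * Q s0 s1 * (\<beta> ^ t * lam (?f h) i * pit M s1 (fst h)))"
      by (intro sum.cong refl sum.swap)
    also have "\<dots> = (\<Sum>h\<in>Hset M t. \<Sum>i\<in>UNIV. \<beta> ^ Suc t * lam (?f h) i * (\<Sum>s1\<in>UNIV. Q s0 s1 * pit M s1 (fst h)))"
      by (intro sum.cong refl) (simp add: sum_distrib_left mult_ac)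
    finally show ?thesis .
  qed
  also have "\<dots> = (\<Sum>h\<in>Hset M t. ?G (?f h))"
  proof (rule sum.cong[OF refl])
    fix h assume "h \<in> Hset M t"
    then have "fst h \<noteq> []" unfolding Hset_def by auto
    then show "(\<Sum>i\<in>UNIV. \<beta> ^ Suc t * lam (?f h) i * (\<Sum>s1\<in>UNIV. Q s0 s1 * pit M s1 (fst h))) = ?G (?f h)"
      by (simp add: pit_sum)
  qed
  also have "\<dots> \<le> (\<Sum>h\<in>Hset M (Suc t). ?G h)"
  proof (rule sum_img_le)
    show "inj_on ?f (Hset M t)" by (auto simp: inj_on_def prod_eq_iff)
    show "?f ` Hset M t \<subseteq> Hset M (Suc t)" using assms(2) unfolding Hset_def by auto
    show "finite (Hset M (Suc t))" by (rule finite_Hset)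
    show "0 \<le> ?G h" for h using nnlD[OF assms(1)] b0 pit_nn
      by (intro sum_nonneg mult_nonneg_nonneg) auto
  qed
  finally show ?thesis unfolding T_def .
qed

lemma lsh_Lambda:
  assumes "lam \<in> Lambda M s0" "a0 \<in> Act M"
  shows "lsh lam s0 a0 \<in> Lambda M s1"
proof -
  have nn: "nnl lam" and sm: "summable (\<lambda>t. T t lam s0)" using assms(1) Lambda_iff by auto
  have nn': "nnl (lsh lam s0 a0)" using nn unfolding nnl_def lsh_def by auto
  have "summable (\<lambda>t. T t (lsh lam s0 a0) s1)"
  proof (rule summable_comparison_test'[where N=0])
    show "summable (\<lambda>t. (1 / (\<beta> * Q s0 s1)) * T (Suc t) lam s0)"
      using sm by (intro summable_mult) (subst summable_Suc_iff)
    fix t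
    have "Q s0 s1 * T t (lsh lam s0 a0) s1 \<le> (\<Sum>s\<in>UNIV. Q s0 s * T t (lsh lam s0 a0) s)"
      by (rule member_le_sum[where f="\<lambda>s. Q s0 s * T t (lsh lam s0 a0) s"])
         (use tpos T_nn[OF nn'] in \<open>auto simp: less_imp_le\<close>)
    then have "\<beta> * (Q s0 s1 * T t (lsh lam s0 a0) s1) \<le> \<beta> * (\<Sum>s\<in>UNIV. Q s0 s * T t (lsh lam s0 a0) s)"
      using b0 by (simp add: mult_left_mono)
    then have "\<beta> * (Q s0 s1 * T t (lsh lam s0 a0) s1) \<le> T (Suc t) lam s0"
      using T_shift[OF nn assms(2), of s0 t] by linarith
    then have "T t (lsh lam s0 a0) s1 \<le> (1 / (\<beta> * Q s0 s1)) * T (Suc t) lam s0"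
      using b0 tpos[of s0 s1] by (simp add: field_simps)
    then show "norm (T t (lsh lam s0 a0) s1) \<le> (1 / (\<beta> * Q s0 s1)) * T (Suc t) lam s0"
      using T_nn[OF nn'] by simp
  qed
  then show ?thesis using nn' Lambda_iff by blast
qed

lemma T0_ge: assumes nn: "nnl lam" shows "(\<Sum>i\<in>UNIV. lam ([s0], []) i) \<le> T 0 lam s0"
proof -
  let ?G = "\<lambda>h. \<Sum>i\<in>UNIV. \<beta> ^ 0 * lam h i * pit M s0 (fst h)"
  have "([s0], []) \<in> Hset M 0" unfolding Hset_def by simp
  then have "?G ([s0], []) \<le> sum ?G (Hset M 0)"
    by (intro member_le_sum finite_Hset) (use nnlD[OF nn] pit_nn in \<open>auto intro!: sum_nonneg mult_nonneg_nonneg\<close>)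
  then show ?thesis unfolding T_def by simp
qed

lemma PP_rec:
  assumes "adm M x0 a" "x0 \<in> Xs M" "lam \<in> Lambda M s0"
  shows "PP a lam x0 s0 = (\<Sum>i\<in>UNIV. lam ([s0], []) i * (Vg i a x0 s0 - gbar M i)) +
     \<beta> * (\<Sum>s1\<in>UNIV. Q s0 s1 * PP (ash a s0) (lsh lam s0 (a [s0])) (zeta M x0 (a [s0]) s0) s1)"
proof -
  have e: "phiP a lam x0 s0 (s1 # ys) =
      phiP (ash a s0) (lsh lam s0 (a [s0])) (zeta M x0 (a [s0]) s0) s1 ys" for s1 ys
  proof -
    have "hist_of a (s0 # s1 # ys) = (s0 # s1 # ys, a [s0] # snd (hist_of (ash a s0) (s1 # ys)))"
      by (rule hist_of_shift) simp
    then have "lam (hist_of a (s0 # s1 # ys)) i = lsh lam s0 (a [s0]) (hist_of (ash a s0) (s1 # ys)) i" for i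
      unfolding lsh_def by simp
    then show ?thesis unfolding phiP_def by (simp add: condsum_shift[where hs="s1 # ys"])
  qed
  have e0: "phiP a lam x0 s0 [] = (\<Sum>i\<in>UNIV. lam ([s0], []) i * (Vg i a x0 s0 - gbar M i))"
    unfolding phiP_def Vg_def by simp
  show ?thesis unfolding PP_def
    by (subst ser_rec[OF ok_phiP[OF assms]]) (simp only: e e0)
qed

end

lemma alg_rec:
  fixes \<gamma> l g c :: "'i::finite \<Rightarrow> real" and q :: "'s::finite \<Rightarrow> real" and V :: "'i \<Rightarrow> 's \<Rightarrow> real"
  shows "(\<Sum>i\<in>UNIV. \<gamma> i * (g i + b * (\<Sum>s\<in>UNIV. q s * V i s))) +
         (\<Sum>i\<in>UNIV. l i * ((g i + b * (\<Sum>s\<in>UNIV. q s * V i s)) - c i)) =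
         (\<Sum>i\<in>UNIV. \<gamma> i * g i + l i * (g i - c i)) + b * (\<Sum>s\<in>UNIV. q s * (\<Sum>i\<in>UNIV. (\<gamma> i + l i) * V i s))"
proof -
  have "b * (\<Sum>s\<in>UNIV. q s * (\<Sum>i\<in>UNIV. (\<gamma> i + l i) * V i s)) =
        (\<Sum>s\<in>UNIV. \<Sum>i\<in>UNIV. b * (q s * ((\<gamma> i + l i) * V i s)))"
    by (simp add: sum_distrib_left)
  also have "\<dots> = (\<Sum>i\<in>UNIV. \<Sum>s\<in>UNIV. b * (q s * ((\<gamma> i + l i) * V i s)))"
    by (rule sum.swap)
  also have "\<dots> = (\<Sum>i\<in>UNIV. (\<gamma> i + l i) * (b * (\<Sum>s\<in>UNIV. q s * V i s)))"
    by (simp add: sum_distrib_left mult_ac)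
  finally have e: "b * (\<Sum>s\<in>UNIV. q s * (\<Sum>i\<in>UNIV. (\<gamma> i + l i) * V i s)) =
      (\<Sum>i\<in>UNIV. (\<gamma> i + l i) * (b * (\<Sum>s\<in>UNIV. q s * V i s)))" .
  show ?thesis unfolding e sum.distrib[symmetric]
    by (rule sum.cong) (simp_all add: algebra_simps)
qed

context ctx begin

definition stage where
  "stage x a s \<gamma> l = rew M x a s + (\<Sum>i\<in>UNIV. \<gamma> $ i * gcon M i x a s + l $ i * (gcon M i x a s - gbar M i))"

definition W where
  "W lam \<gamma> x s = (SUP a\<in>{a. adm M x a}. Lag M a lam \<gamma> x s)"

lemma lam0_comp[simp]: "lam0 lam s0 $ i = lam ([s0], []) i"
  by (simp add: lam0_def)

lemma DEC:
  assumes "adm M x0 a" "x0 \<in> Xs M" "lam \<in> Lambda M s0"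
  shows "Lag M a lam \<gamma> x0 s0 = stage x0 (a [s0]) s0 \<gamma> (lam0 lam s0) +
     \<beta> * (\<Sum>s1\<in>UNIV. Q s0 s1 * Lag M (ash a s0) (lsh lam s0 (a [s0])) (\<gamma> + lam0 lam s0) (zeta M x0 (a [s0]) s0) s1)"
proof -
  let ?a0 = "a [s0]" let ?x1 = "zeta M x0 (a [s0]) s0" let ?a' = "ash a s0"
  let ?l' = "lsh lam s0 (a [s0])" let ?l = "lam0 lam s0"
  have a0: "?a0 \<in> Act M" using adm_act[OF assms(1)] by simp
  have x1: "?x1 \<in> Xs M" using zX[OF assms(2) a0] .
  have adm': "adm M ?x1 ?a'" by (rule adm_shift[OF assms(1)])
  have l': "?l' \<in> Lambda M s1" for s1 by (rule lsh_Lambda[OF assms(3) a0])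
  have sp: "Lag M ?a' ?l' (\<gamma> + ?l) ?x1 s1 = Vr ?a' ?x1 s1 + (\<Sum>i\<in>UNIV. (\<gamma> $ i + ?l $ i) * Vg i ?a' ?x1 s1) + PP ?a' ?l' ?x1 s1" for s1
    using Lag_split[OF adm' x1 l'] by simp
  have "Lag M a lam \<gamma> x0 s0 = Vr a x0 s0 + (\<Sum>i\<in>UNIV. \<gamma> $ i * Vg i a x0 s0) + PP a lam x0 s0"
    by (rule Lag_split[OF assms])
  also have "\<dots> = (rew M x0 ?a0 s0 + \<beta> * (\<Sum>s1\<in>UNIV. Q s0 s1 * Vr ?a' ?x1 s1))
      + ((\<Sum>i\<in>UNIV. \<gamma> $ i * (gcon M i x0 ?a0 s0 + \<beta> * (\<Sum>s1\<in>UNIV. Q s0 s1 * Vg i ?a' ?x1 s1))) +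
         (\<Sum>i\<in>UNIV. ?l $ i * ((gcon M i x0 ?a0 s0 + \<beta> * (\<Sum>s1\<in>UNIV. Q s0 s1 * Vg i ?a' ?x1 s1)) - gbar M i)))
      + \<beta> * (\<Sum>s1\<in>UNIV. Q s0 s1 * PP ?a' ?l' ?x1 s1)"
    using Vr_rec[OF assms(1,2), of s0] Vg_rec[OF assms(1,2), of _ s0] PP_rec[OF assms]
    by (simp add: ash_def)
  also have "\<dots> = (rew M x0 ?a0 s0 + \<beta> * (\<Sum>s1\<in>UNIV. Q s0 s1 * Vr ?a' ?x1 s1))
      + ((\<Sum>i\<in>UNIV. \<gamma> $ i * gcon M i x0 ?a0 s0 + ?l $ i * (gcon M i x0 ?a0 s0 - gbar M i)) +
         \<beta> * (\<Sum>s1\<in>UNIV. Q s0 s1 * (\<Sum>i\<in>UNIV. (\<gamma> $ i + ?l $ i) * Vg i ?a' ?x1 s1)))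
      + \<beta> * (\<Sum>s1\<in>UNIV. Q s0 s1 * PP ?a' ?l' ?x1 s1)"
    by (subst alg_rec[where \<gamma>="\<lambda>i. \<gamma> $ i" and l="\<lambda>i. ?l $ i"]) (rule refl)
  also have "\<dots> = stage x0 ?a0 s0 \<gamma> ?l + \<beta> * (\<Sum>s1\<in>UNIV. Q s0 s1 * Lag M ?a' ?l' (\<gamma> + ?l) ?x1 s1)"
    unfolding sp stage_def by (simp add: sum.distrib distrib_left algebra_simps)
  finally show ?thesis .
qed

lemma Lag_cong_plan:
  assumes "\<And>h. h \<noteq> [] \<Longrightarrow> hd h = s1 \<Longrightarrow> a h = b h"
  shows "Lag M a lam \<gamma> x s1 = Lag M b lam \<gamma> x s1"
proof -
  have c: "\<And>h. h \<noteq> [] \<Longrightarrow> hd h = hd (s1 # ys) \<Longrightarrow> a h = b h" for ys using assms by simp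
  have e1: "stg M f a x (s1 # ys) = stg M f b x (s1 # ys)" for f ys by (rule stg_cong[OF _ c]) simp
  have e2: "hist_of a (s1 # ys) = hist_of b (s1 # ys)" for ys by (rule hist_of_cong[OF _ c]) simp
  have e3: "condsum M (s1 # ys) (stg M f a x) = condsum M (s1 # ys) (stg M f b x)" for f ys
    by (rule condsum_cong[OF _ c]) simp
  show ?thesis unfolding Lag_def e1 e2 e3 ..
qed

lemma Lag_cong_lam:
  assumes "\<And>ss as. ss \<noteq> [] \<Longrightarrow> hd ss = s1 \<Longrightarrow> lam (ss, as) = lam' (ss, as)"
  shows "Lag M a lam \<gamma> x s1 = Lag M a lam' \<gamma> x s1"
proof -
  have "lam (hist_of a (s1 # ys)) = lam' (hist_of a (s1 # ys))" for ys
    using assms[of "s1 # ys" "snd (hist_of a (s1 # ys))"] by (simp add: hist_of_def)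
  then show ?thesis unfolding Lag_def by simp
qed

lemma Vr_bound: "adm M x a \<Longrightarrow> x \<in> Xs M \<Longrightarrow> \<bar>Vr a x s\<bar> \<le> Cr / (1 - \<beta>)"
  unfolding Vr_def by (rule condsum_bound_r) auto

lemma Vg_bound: "adm M x a \<Longrightarrow> x \<in> Xs M \<Longrightarrow> \<bar>Vg i a x s\<bar> \<le> Cg i / (1 - \<beta>)"
  unfolding Vg_def by (rule condsum_bound_g) auto

lemma Lag_upper:
  assumes "adm M x a" "x \<in> Xs M" "lam \<in> Lambda M s"
  shows "Lag M a lam \<gamma> x s \<le> Cr / (1 - \<beta>) + (\<Sum>i\<in>UNIV. \<bar>\<gamma> $ i\<bar> * (Cg i / (1 - \<beta>))) + Kc * (\<Sum>t. T t lam s)"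
proof -
  have "(\<Sum>i\<in>UNIV. \<gamma> $ i * Vg i a x s) \<le> (\<Sum>i\<in>UNIV. \<bar>\<gamma> $ i\<bar> * (Cg i / (1 - \<beta>)))"
  proof (rule sum_mono)
    fix i
    have "\<gamma> $ i * Vg i a x s \<le> \<bar>\<gamma> $ i\<bar> * \<bar>Vg i a x s\<bar>" by (metis abs_ge_self abs_mult)
    also have "\<dots> \<le> \<bar>\<gamma> $ i\<bar> * (Cg i / (1 - \<beta>))" by (rule mult_left_mono[OF Vg_bound[OF assms(1,2)]]) simp
    finally show "\<gamma> $ i * Vg i a x s \<le> \<bar>\<gamma> $ i\<bar> * (Cg i / (1 - \<beta>))" .
  qed
  then show ?thesis using Lag_split[OF assms, of \<gamma>] Vr_bound[OF assms(1,2), of s] PP_upper[OF assms]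
    by linarith
qed

lemma adm_ne: "x \<in> Xs M \<Longrightarrow> {a. adm M x a} \<noteq> {}"
  using feas_adm by blast

lemma W_bdd: "x \<in> Xs M \<Longrightarrow> lam \<in> Lambda M s \<Longrightarrow> bdd_above ((\<lambda>a. Lag M a lam \<gamma> x s) ` {a. adm M x a})"
  by (rule bdd_aboveI2[where M="Cr / (1 - \<beta>) + (\<Sum>i\<in>UNIV. \<bar>\<gamma> $ i\<bar> * (Cg i / (1 - \<beta>))) + Kc * (\<Sum>t. T t lam s)"])
     (use Lag_upper in auto)

lemma Lag_le_W: "adm M x a \<Longrightarrow> x \<in> Xs M \<Longrightarrow> lam \<in> Lambda M s \<Longrightarrow> Lag M a lam \<gamma> x s \<le> W lam \<gamma> x s"
  unfolding W_def by (rule cSUP_upper[OF _ W_bdd]) auto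

lemma W_le: "x \<in> Xs M \<Longrightarrow> (\<And>a. adm M x a \<Longrightarrow> Lag M a lam \<gamma> x s \<le> c) \<Longrightarrow> W lam \<gamma> x s \<le> c"
  unfolding W_def by (rule cSUP_least[OF adm_ne]) auto

lemma W_feas: "feasible M x s a \<Longrightarrow> x \<in> Xs M \<Longrightarrow> lam \<in> Lambda M s \<Longrightarrow>
   Vr a x s + (\<Sum>i\<in>UNIV. \<gamma> $ i * Vg i a x s) \<le> W lam \<gamma> x s"
  using Lag_le_W[of x a lam s \<gamma>] Lag_split[of x a lam s \<gamma>] PP_nn[of x s a lam]
  unfolding feasible_def by auto

definition lb where "lb \<gamma> = (Cr + (\<Sum>i\<in>UNIV. \<gamma> $ i * Cg i)) / (1 - \<beta>)"

lemma lb_feas: assumes "adm M x a" "x \<in> Xs M" "\<gamma> \<in> Pos"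
  shows "- lb \<gamma> \<le> Vr a x s + (\<Sum>i\<in>UNIV. \<gamma> $ i * Vg i a x s)"
proof -
  have "- (\<gamma> $ i * Cg i / (1 - \<beta>)) \<le> \<gamma> $ i * Vg i a x s" for i
  proof -
    have "0 \<le> \<gamma> $ i" using assms(3) unfolding Pos_def by auto
    then have "\<gamma> $ i * (- (Cg i / (1 - \<beta>))) \<le> \<gamma> $ i * Vg i a x s"
      using Vg_bound[OF assms(1,2), of i s] by (intro mult_left_mono) auto
    then show ?thesis by simp
  qed
  then have "- (\<Sum>i\<in>UNIV. \<gamma> $ i * Cg i / (1 - \<beta>)) \<le> (\<Sum>i\<in>UNIV. \<gamma> $ i * Vg i a x s)"
    by (simp add: sum_negf[symmetric] sum_mono)
  moreover have "- (Cr / (1 - \<beta>)) \<le> Vr a x s" using Vr_bound[OF assms(1,2), of s] by auto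
  ultimately show ?thesis unfolding lb_def by (simp add: add_divide_distrib sum_divide_distrib)
qed

lemma W_lb: "x \<in> Xs M \<Longrightarrow> \<gamma> \<in> Pos \<Longrightarrow> lam \<in> Lambda M s \<Longrightarrow> - lb \<gamma> \<le> W lam \<gamma> x s"
  using feas[of x s] W_feas lb_feas unfolding feasible_def by (meson order_trans)

lemma D_eq: "Dval M \<gamma> x s = (INF lam\<in>Lambda M s. W lam \<gamma> x s)"
  unfolding Dval_def W_def ..

lemma Lambda_ne: "Lambda M s \<noteq> {}" using Lambda_zero by blast

lemma D_le_W: "x \<in> Xs M \<Longrightarrow> \<gamma> \<in> Pos \<Longrightarrow> lam \<in> Lambda M s \<Longrightarrow> Dval M \<gamma> x s \<le> W lam \<gamma> x s"
  unfolding D_eq by (rule cINF_lower) (auto intro!: bdd_belowI2[where m="- lb \<gamma>"] W_lb)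

lemma D_ge: "(\<And>lam. lam \<in> Lambda M s \<Longrightarrow> c \<le> W lam \<gamma> x s) \<Longrightarrow> c \<le> Dval M \<gamma> x s"
  unfolding D_eq by (rule cINF_greatest[OF Lambda_ne])

end

context ctx begin

lemma Aset_D: "a0 \<in> Aset x s \<Longrightarrow> a0 \<in> Act M \<and> 0 \<le> pcon M x a0 s"
  unfolding Aset_def by simp

lemma lam0_Pos: "nnl lam \<Longrightarrow> lam0 lam s0 \<in> Pos"
  unfolding Pos_def by (auto intro: nnlD)

lemma Pos_add: "\<gamma> \<in> Pos \<Longrightarrow> l \<in> Pos \<Longrightarrow> \<gamma> + l \<in> Pos"
  unfolding Pos_def by auto

lemma KW:
  assumes lam: "lam \<in> Lambda M s0" and x0: "x0 \<in> Xs M" and a0: "a0 \<in> Aset x0 s0"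
  shows "stage x0 a0 s0 \<gamma> (lam0 lam s0) +
    \<beta> * (\<Sum>s1\<in>UNIV. Q s0 s1 * W (lsh lam s0 a0) (\<gamma> + lam0 lam s0) (zeta M x0 a0 s0) s1)
    \<le> W lam \<gamma> x0 s0"
proof (rule field_le_epsilon)
  fix e :: real assume e: "0 < e"
  define x1 where "x1 = zeta M x0 a0 s0"
  define l where "l = lam0 lam s0"
  define l' where "l' = lsh lam s0 a0"
  have a0A: "a0 \<in> Act M" and pc: "0 \<le> pcon M x0 a0 s0" using Aset_D[OF a0] by auto
  have x1: "x1 \<in> Xs M" unfolding x1_def using zX[OF x0 a0A] .
  have l': "l' \<in> Lambda M s1" for s1 unfolding l'_def by (rule lsh_Lambda[OF lam a0A])
  have "\<forall>s1. \<exists>b. adm M x1 b \<and> W l' (\<gamma> + l) x1 s1 - e < Lag M b l' (\<gamma> + l) x1 s1"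
  proof
    fix s1
    have "W l' (\<gamma> + l) x1 s1 - e < W l' (\<gamma> + l) x1 s1" using e by simp
    then show "\<exists>b. adm M x1 b \<and> W l' (\<gamma> + l) x1 s1 - e < Lag M b l' (\<gamma> + l) x1 s1"
      unfolding W_def[of l' "\<gamma> + l" x1 s1]
      by (subst (asm) less_cSUP_iff[OF adm_ne[OF x1] W_bdd[OF x1 l']]) auto
  qed
  then obtain b where b: "\<And>s1. adm M x1 (b s1)" "\<And>s1. W l' (\<gamma> + l) x1 s1 - e < Lag M (b s1) l' (\<gamma> + l) x1 s1"
    by metis
  obtain base where base: "adm M x0 base" using feas_adm[OF x0] by blast
  define a where "a hs = (if hs = [s0] then a0 else if hs \<noteq> [] \<and> hd hs = s0 then b (hd (tl hs)) (tl hs) else base hs)" for hs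
  have as0: "a [s0] = a0" unfolding a_def by simp
  have ash: "ash a s0 h = b s1 h" if "h \<noteq> []" "hd h = s1" for h s1
    using that unfolding ash_def a_def by auto
  have adm: "adm M x0 a" unfolding adm_def
  proof (intro allI impI)
    fix hs :: "'s list" assume hs: "hs \<noteq> []"
    show "a hs \<in> Act M \<and> 0 \<le> pcon M (xpath M a x0 hs) (a hs) (last hs)"
    proof (cases "hs = [s0]")
      case True then show ?thesis using a0A pc as0 by simp
    next
      case False
      show ?thesis
      proof (cases "hd hs = s0")
        case True
        then obtain hs' where hs': "hs = s0 # hs'" "hs' \<noteq> []" using hs False by (cases hs) auto
        have ah: "a hs = b (hd hs') hs'" using hs' unfolding a_def by simp
        have "xpath M a x0 hs = xpath M (ash a s0) x1 hs'"
          unfolding hs'(1) x1_def using xpath_shift[OF hs'(2), of a x0 s0] as0 by simp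
        also have "\<dots> = xpath M (b (hd hs')) x1 hs'"
          by (rule xpath_cong[OF hs'(2)]) (rule ash)
        finally have xe: "xpath M a x0 hs = xpath M (b (hd hs')) x1 hs'" .
        have "b (hd hs') hs' \<in> Act M \<and> 0 \<le> pcon M (xpath M (b (hd hs')) x1 hs') (b (hd hs') hs') (last hs')"
          using b(1)[of "hd hs'"] hs'(2) unfolding adm_def by blast
        then show ?thesis using xe ah hs' by simp
      next
        case False
        have e1: "a h = base h" if "h \<noteq> []" "hd h = hd hs" for h
          using that False unfolding a_def by auto
        have "xpath M a x0 hs = xpath M base x0 hs" by (rule xpath_cong[OF hs e1])
        then show ?thesis using base hs e1[OF hs refl] unfolding adm_def by auto
      qed
    qed
  qed
  have "Lag M a lam \<gamma> x0 s0 = stage x0 a0 s0 \<gamma> l + \<beta> * (\<Sum>s1\<in>UNIV. Q s0 s1 * Lag M (ash a s0) l' (\<gamma> + l) x1 s1)"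
    using DEC[OF adm x0 lam, of \<gamma>] as0 unfolding l_def l'_def x1_def by simp
  also have "\<dots> = stage x0 a0 s0 \<gamma> l + \<beta> * (\<Sum>s1\<in>UNIV. Q s0 s1 * Lag M (b s1) l' (\<gamma> + l) x1 s1)"
    by (intro arg_cong2[where f="(+)"] arg_cong2[where f="(*)"] refl sum.cong Lag_cong_plan ash) auto
  finally have lagA: "Lag M a lam \<gamma> x0 s0 = stage x0 a0 s0 \<gamma> l + \<beta> * (\<Sum>s1\<in>UNIV. Q s0 s1 * Lag M (b s1) l' (\<gamma> + l) x1 s1)" .
  have "(\<Sum>s1\<in>UNIV. Q s0 s1 * W l' (\<gamma> + l) x1 s1) \<le> (\<Sum>s1\<in>UNIV. Q s0 s1 * (Lag M (b s1) l' (\<gamma> + l) x1 s1 + e))"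
  proof (intro sum_mono mult_left_mono)
    fix s1
    show "W l' (\<gamma> + l) x1 s1 \<le> Lag M (b s1) l' (\<gamma> + l) x1 s1 + e" using b(2)[of s1] by linarith
    show "0 \<le> Q s0 s1" using tpos[of s0 s1] by simp
  qed
  also have "\<dots> = (\<Sum>s1\<in>UNIV. Q s0 s1 * Lag M (b s1) l' (\<gamma> + l) x1 s1) + e"
    by (simp add: distrib_left sum.distrib sum_distrib_right[symmetric] tsum)
  finally have sumle: "(\<Sum>s1\<in>UNIV. Q s0 s1 * W l' (\<gamma> + l) x1 s1) \<le> (\<Sum>s1\<in>UNIV. Q s0 s1 * Lag M (b s1) l' (\<gamma> + l) x1 s1) + e" .
  have "stage x0 a0 s0 \<gamma> l + \<beta> * (\<Sum>s1\<in>UNIV. Q s0 s1 * W l' (\<gamma> + l) x1 s1) \<le> Lag M a lam \<gamma> x0 s0 + \<beta> * e"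
    unfolding lagA using mult_left_mono[OF sumle less_imp_le[OF b0]] by (simp add: distrib_left)
  also have "\<dots> \<le> W lam \<gamma> x0 s0 + e"
    using Lag_le_W[OF adm x0 lam, of \<gamma>] b1 e by (smt (verit) mult_less_cancel_right2)
  finally show "stage x0 a0 s0 \<gamma> (lam0 lam s0) +
    \<beta> * (\<Sum>s1\<in>UNIV. Q s0 s1 * W (lsh lam s0 a0) (\<gamma> + lam0 lam s0) (zeta M x0 a0 s0) s1) \<le> W lam \<gamma> x0 s0 + e"
    unfolding l_def l'_def x1_def .
qed

definition Psi where
  "Psi F \<gamma> x s l = (SUP a\<in>Aset x s. stage x a s \<gamma> l + \<beta> * (\<Sum>s'\<in>UNIV. Q s s' * F (\<gamma> + l) (zeta M x a s) s'))"

lemma Bell_eq: "Bell M F \<gamma> x s = (INF l\<in>Pos. Psi F \<gamma> x s l)"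
  unfolding Bell_def Psi_def stage_def Aset_def by simp

lemma Psi_ge: "a \<in> Aset x s \<Longrightarrow>
    stage x a s \<gamma> l + \<beta> * (\<Sum>s'\<in>UNIV. Q s s' * F (\<gamma> + l) (zeta M x a s) s') \<le> Psi F \<gamma> x s l"
  unfolding Psi_def by (rule cSUP_upper) (auto intro!: bdd_above_finite Aset_finite)

lemma Psi_le: "x \<in> Xs M \<Longrightarrow> (\<And>a. a \<in> Aset x s \<Longrightarrow>
    stage x a s \<gamma> l + \<beta> * (\<Sum>s'\<in>UNIV. Q s s' * F (\<gamma> + l) (zeta M x a s) s') \<le> c) \<Longrightarrow> Psi F \<gamma> x s l \<le> c"
  unfolding Psi_def by (rule cSUP_least[OF Aset_ne]) auto

lemma Pos_ne: "Pos \<noteq> {}" unfolding Pos_def by (auto intro!: exI[where x=0])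

lemma Bell_ge: "(\<And>l. l \<in> Pos \<Longrightarrow> c \<le> Psi F \<gamma> x s l) \<Longrightarrow> c \<le> Bell M F \<gamma> x s"
  unfolding Bell_eq by (rule cINF_greatest[OF Pos_ne])

definition LBP where
  "LBP F \<longleftrightarrow> (\<forall>x\<in>Xs M. \<forall>s a. feasible M x s a \<longrightarrow> (\<forall>\<gamma>\<in>Pos. Vr a x s + (\<Sum>i\<in>UNIV. \<gamma> $ i * Vg i a x s) \<le> F \<gamma> x s))"

lemma stage_V:
  fixes l :: "real^'i"
  assumes "adm M x0 a" "x0 \<in> Xs M"
  shows "stage x0 (a [s0]) s0 \<gamma> l + \<beta> * (\<Sum>s1\<in>UNIV. Q s0 s1 * (Vr (ash a s0) (zeta M x0 (a [s0]) s0) s1 +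
      (\<Sum>i\<in>UNIV. (\<gamma> + l) $ i * Vg i (ash a s0) (zeta M x0 (a [s0]) s0) s1)))
    = Vr a x0 s0 + (\<Sum>i\<in>UNIV. \<gamma> $ i * Vg i a x0 s0) + (\<Sum>i\<in>UNIV. l $ i * (Vg i a x0 s0 - gbar M i))"
proof -
  let ?a0 = "a [s0]" let ?x1 = "zeta M x0 (a [s0]) s0" let ?a' = "ash a s0"
  have "Vr a x0 s0 + (\<Sum>i\<in>UNIV. \<gamma> $ i * Vg i a x0 s0) + (\<Sum>i\<in>UNIV. l $ i * (Vg i a x0 s0 - gbar M i))
    = (rew M x0 ?a0 s0 + \<beta> * (\<Sum>s1\<in>UNIV. Q s0 s1 * Vr ?a' ?x1 s1))
      + ((\<Sum>i\<in>UNIV. \<gamma> $ i * (gcon M i x0 ?a0 s0 + \<beta> * (\<Sum>s1\<in>UNIV. Q s0 s1 * Vg i ?a' ?x1 s1))) +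
         (\<Sum>i\<in>UNIV. l $ i * ((gcon M i x0 ?a0 s0 + \<beta> * (\<Sum>s1\<in>UNIV. Q s0 s1 * Vg i ?a' ?x1 s1)) - gbar M i)))"
    using Vr_rec[OF assms(1,2), of s0] Vg_rec[OF assms(1,2), of _ s0] by (simp add: add.assoc)
  also have "\<dots> = (rew M x0 ?a0 s0 + \<beta> * (\<Sum>s1\<in>UNIV. Q s0 s1 * Vr ?a' ?x1 s1))
      + ((\<Sum>i\<in>UNIV. \<gamma> $ i * gcon M i x0 ?a0 s0 + l $ i * (gcon M i x0 ?a0 s0 - gbar M i)) +
         \<beta> * (\<Sum>s1\<in>UNIV. Q s0 s1 * (\<Sum>i\<in>UNIV. (\<gamma> $ i + l $ i) * Vg i ?a' ?x1 s1)))"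
    by (subst alg_rec[where \<gamma>="\<lambda>i. \<gamma> $ i" and l="\<lambda>i. l $ i"]) (rule refl)
  also have "\<dots> = stage x0 ?a0 s0 \<gamma> l + \<beta> * (\<Sum>s1\<in>UNIV. Q s0 s1 * (Vr ?a' ?x1 s1 +
      (\<Sum>i\<in>UNIV. (\<gamma> + l) $ i * Vg i ?a' ?x1 s1)))"
    unfolding stage_def by (simp add: sum.distrib distrib_left algebra_simps)
  finally show ?thesis by simp
qed

lemma feas_Vg: "feasible M x0 s0 a \<Longrightarrow> gbar M i \<le> Vg i a x0 s0"
  unfolding feasible_def Vg_def by auto

lemma Psi_bdd:
  assumes "LBP F" "x0 \<in> Xs M" "\<gamma> \<in> Pos"
  shows "bdd_below (Psi F \<gamma> x0 s0 ` Pos)"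
proof -
  obtain af where af: "feasible M x0 s0 af" using feas[OF assms(2)] by blast
  have adm: "adm M x0 af" using af unfolding feasible_def by simp
  let ?a0 = "af [s0]" let ?x1 = "zeta M x0 (af [s0]) s0" let ?a' = "ash af s0"
  have a0A: "?a0 \<in> Act M" using adm_act[OF adm] by simp
  have x1: "?x1 \<in> Xs M" using zX[OF assms(2) a0A] .
  show ?thesis
  proof (rule bdd_belowI2[where m="- lb \<gamma>"])
    fix l :: "real^'i" assume l: "l \<in> Pos"
    have fs: "feasible M ?x1 s1 ?a'" for s1 by (rule feasible_shift[OF af])
    have "Vr ?a' ?x1 s1 + (\<Sum>i\<in>UNIV. (\<gamma> + l) $ i * Vg i ?a' ?x1 s1) \<le> F (\<gamma> + l) ?x1 s1" for s1
      using assms(1) fs x1 Pos_add[OF assms(3) l] unfolding LBP_def by blast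
    then have "stage x0 ?a0 s0 \<gamma> l + \<beta> * (\<Sum>s1\<in>UNIV. Q s0 s1 * (Vr ?a' ?x1 s1 +
      (\<Sum>i\<in>UNIV. (\<gamma> + l) $ i * Vg i ?a' ?x1 s1))) \<le> stage x0 ?a0 s0 \<gamma> l + \<beta> * (\<Sum>s1\<in>UNIV. Q s0 s1 * F (\<gamma> + l) ?x1 s1)"
      using b0 tpos by (intro add_left_mono mult_left_mono sum_mono) (auto simp: less_imp_le)
    also have "\<dots> \<le> Psi F \<gamma> x0 s0 l" by (rule Psi_ge[OF adm_Aset[OF adm]])
    finally have "Vr af x0 s0 + (\<Sum>i\<in>UNIV. \<gamma> $ i * Vg i af x0 s0) + (\<Sum>i\<in>UNIV. l $ i * (Vg i af x0 s0 - gbar M i))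
      \<le> Psi F \<gamma> x0 s0 l" unfolding stage_V[OF adm assms(2)] .
    moreover have "0 \<le> (\<Sum>i\<in>UNIV. l $ i * (Vg i af x0 s0 - gbar M i))"
      using l feas_Vg[OF af] unfolding Pos_def by (intro sum_nonneg mult_nonneg_nonneg) auto
    moreover have "- lb \<gamma> \<le> Vr af x0 s0 + (\<Sum>i\<in>UNIV. \<gamma> $ i * Vg i af x0 s0)"
      by (rule lb_feas[OF adm assms(2,3)])
    ultimately show "- lb \<gamma> \<le> Psi F \<gamma> x0 s0 l" by linarith
  qed
qed

lemma Bell_le_Psi: "LBP F \<Longrightarrow> x0 \<in> Xs M \<Longrightarrow> \<gamma> \<in> Pos \<Longrightarrow> l \<in> Pos \<Longrightarrow> Bell M F \<gamma> x0 s0 \<le> Psi F \<gamma> x0 s0 l"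
  unfolding Bell_eq by (rule cINF_lower[OF Psi_bdd])

lemma D_LBP: "LBP (Dval M)"
  unfolding LBP_def
proof (intro ballI allI impI)
  fix x s a and \<gamma> :: "real^'i" assume x: "x \<in> Xs M" and f: "feasible M x s a" and g: "\<gamma> \<in> Pos"
  show "Vr a x s + (\<Sum>i\<in>UNIV. \<gamma> $ i * Vg i a x s) \<le> Dval M \<gamma> x s"
    by (rule D_ge) (rule W_feas[OF f x])
qed

lemma Bell_D_le:
  assumes x0: "x0 \<in> Xs M" and g: "\<gamma> \<in> Pos"
  shows "Bell M (Dval M) \<gamma> x0 s0 \<le> Dval M \<gamma> x0 s0"
proof (rule D_ge)
  fix lam assume lam: "lam \<in> Lambda M s0"
  have nn: "nnl lam" using lam Lambda_iff by auto
  let ?l = "lam0 lam s0"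
  have "Bell M (Dval M) \<gamma> x0 s0 \<le> Psi (Dval M) \<gamma> x0 s0 ?l"
    by (rule Bell_le_Psi[OF D_LBP x0 g lam0_Pos[OF nn]])
  also have "\<dots> \<le> W lam \<gamma> x0 s0"
  proof (rule Psi_le[OF x0])
    fix a0 assume a0: "a0 \<in> Aset x0 s0"
    have a0A: "a0 \<in> Act M" using Aset_D[OF a0] by simp
    have x1: "zeta M x0 a0 s0 \<in> Xs M" using zX[OF x0 a0A] .
    have "Dval M (\<gamma> + ?l) (zeta M x0 a0 s0) s1 \<le> W (lsh lam s0 a0) (\<gamma> + ?l) (zeta M x0 a0 s0) s1" for s1
      by (rule D_le_W[OF x1 Pos_add[OF g lam0_Pos[OF nn]] lsh_Lambda[OF lam a0A]])
    then have "stage x0 a0 s0 \<gamma> ?l + \<beta> * (\<Sum>s'\<in>UNIV. Q s0 s' * Dval M (\<gamma> + ?l) (zeta M x0 a0 s0) s')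
      \<le> stage x0 a0 s0 \<gamma> ?l + \<beta> * (\<Sum>s'\<in>UNIV. Q s0 s' * W (lsh lam s0 a0) (\<gamma> + ?l) (zeta M x0 a0 s0) s')"
      using b0 tpos by (intro add_left_mono mult_left_mono sum_mono) (auto simp: less_imp_le)
    also have "\<dots> \<le> W lam \<gamma> x0 s0" by (rule KW[OF lam x0 a0])
    finally show "stage x0 a0 s0 \<gamma> ?l + \<beta> * (\<Sum>s'\<in>UNIV. Q s0 s' * Dval M (\<gamma> + ?l) (zeta M x0 a0 s0) s')
      \<le> W lam \<gamma> x0 s0" .
  qed
  finally show "Bell M (Dval M) \<gamma> x0 s0 \<le> W lam \<gamma> x0 s0" .
qed

end

context ctx begin

definition asm :: "real^'i \<Rightarrow> ('a \<Rightarrow> 's \<Rightarrow> ('s list \<times> 'a list) \<Rightarrow> 'i \<Rightarrow> real) \<Rightarrow> 's \<Rightarrow> ('s list \<times> 'a list) \<Rightarrow> 'i \<Rightarrow> real" where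
  "asm l \<mu> s0 = (\<lambda>h i. if fst h = [s0] \<and> snd h = [] then l $ i
     else if fst h \<noteq> [] \<and> hd (fst h) = s0 \<and> tl (fst h) \<noteq> [] \<and> snd h \<noteq> []
       then \<mu> (hd (snd h)) (hd (tl (fst h))) (tl (fst h), tl (snd h)) i else 0)"

lemma asm_nnl: "l \<in> Pos \<Longrightarrow> (\<And>a s1. nnl (\<mu> a s1)) \<Longrightarrow> nnl (asm l \<mu> s0)"
  unfolding nnl_def asm_def Pos_def by auto

lemma T_asm:
  assumes l: "l \<in> Pos" and mu: "\<And>a s1. nnl (\<mu> a s1)"
  shows "T (Suc t) (asm l \<mu> s0) s0 \<le> \<beta> * (\<Sum>a0\<in>Act M. \<Sum>s1\<in>UNIV. Q s0 s1 * T t (\<mu> a0 s1) s1)"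
proof -
  let ?G = "\<lambda>h. \<Sum>i\<in>UNIV. \<beta> ^ Suc t * asm l \<mu> s0 h i * pit M s0 (fst h)"
  let ?H0 = "{h\<in>Hset M (Suc t). hd (fst h) = s0}"
  let ?g = "\<lambda>h::('s list \<times> 'a list). (hd (snd h), (tl (fst h), tl (snd h)))"
  let ?K = "\<lambda>p::('a \<times> ('s list \<times> 'a list)). \<Sum>i\<in>UNIV. \<beta> ^ Suc t * \<mu> (fst p) (hd (fst (snd p))) (snd p) i *
      (Q s0 (hd (fst (snd p))) * pit M (hd (fst (snd p))) (fst (snd p)))"
  have "T (Suc t) (asm l \<mu> s0) s0 = sum ?G (Hset M (Suc t))" unfolding T_def ..
  also have "\<dots> = sum ?G ?H0"
  proof (rule sum.mono_neutral_right[OF finite_Hset])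
    show "\<forall>h\<in>Hset M (Suc t) - ?H0. ?G h = 0"
    proof
      fix h assume "h \<in> Hset M (Suc t) - ?H0"
      then have "fst h \<noteq> []" "hd (fst h) \<noteq> s0" unfolding Hset_def by auto
      then have "pit M s0 (fst h) = 0" unfolding pit_def by auto
      then show "?G h = 0" by simp
    qed
  qed auto
  also have "\<dots> = (\<Sum>h\<in>?H0. ?K (?g h))"
  proof (rule sum.cong[OF refl])
    fix h assume h: "h \<in> ?H0"
    obtain ss as where hp: "h = (ss, as)" by (cases h)
    from h hp have len: "length ss = Suc (Suc t)" "length as = Suc t" "hd ss = s0" unfolding Hset_def by auto
    then obtain ss' where ss: "ss = s0 # ss'" "ss' \<noteq> []" by (cases ss) (auto, metis list.size(3) nat.distinct(1))
    from len obtain a0 as' where as: "as = a0 # as'" by (cases as) auto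
    obtain y ys where ss': "ss' = y # ys" using ss(2) by (cases ss') auto
    have "asm l \<mu> s0 h i = \<mu> a0 y (ss', as') i" for i
      unfolding asm_def hp ss as ss' by simp
    moreover have "pit M s0 (fst h) = Q s0 y * pit M y ss'"
      unfolding hp ss ss' pit_def by simp
    ultimately show "?G h = ?K (?g h)" unfolding hp ss as ss' by (simp add: mult_ac)
  qed
  also have "\<dots> \<le> sum ?K (Act M \<times> Hset M t)"
  proof (rule sum_img_le)
    show "inj_on ?g ?H0"
    proof (rule inj_onI)
      fix h1 h2 assume h1: "h1 \<in> ?H0" and h2: "h2 \<in> ?H0" and e: "?g h1 = ?g h2"
      have "fst h1 = s0 # tl (fst h1)" "snd h1 = hd (snd h1) # tl (snd h1)"
        "fst h2 = s0 # tl (fst h2)" "snd h2 = hd (snd h2) # tl (snd h2)"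
        using h1 h2 unfolding Hset_def by (auto simp: length_Suc_conv)
      then show "h1 = h2" using e by (metis prod.collapse prod.inject)
    qed
    show "?g ` ?H0 \<subseteq> Act M \<times> Hset M t"
    proof
      fix p assume "p \<in> ?g ` ?H0"
      then obtain h where h: "h \<in> ?H0" "p = ?g h" by blast
      then have "length (fst h) = Suc (Suc t)" "length (snd h) = Suc t" "set (snd h) \<subseteq> Act M"
        unfolding Hset_def by auto
      then show "p \<in> Act M \<times> Hset M t" using h(2) unfolding Hset_def
        by (cases "snd h") auto
    qed
    show "finite (Act M \<times> Hset M t)" using finA finite_Hset by blast
    show "0 \<le> ?K p" for p using nnlD[OF mu] tpos pit_nn b0
      by (intro sum_nonneg mult_nonneg_nonneg) (auto simp: less_imp_le)
  qed
  also have "\<dots> = (\<Sum>a0\<in>Act M. \<Sum>h\<in>Hset M t. ?K (a0, h))"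
  proof -
    have cp: "(\<Sum>a0\<in>Act M. \<Sum>h\<in>Hset M t. ?K (a0, h)) = (\<Sum>(a0,h)\<in>Act M \<times> Hset M t. ?K (a0, h))"
      by (rule sum.cartesian_product)
    show ?thesis unfolding cp by (intro sum.cong refl) auto
  qed
  also have "\<dots> \<le> (\<Sum>a0\<in>Act M. \<Sum>h\<in>Hset M t. \<Sum>s1\<in>UNIV. \<Sum>i\<in>UNIV.
        \<beta> ^ Suc t * \<mu> a0 s1 h i * (Q s0 s1 * pit M s1 (fst h)))"
  proof (intro sum_mono)
    fix a0 h
    let ?f = "\<lambda>s1. \<Sum>i\<in>UNIV. \<beta> ^ Suc t * \<mu> a0 s1 h i * (Q s0 s1 * pit M s1 (fst h))"
    have "?f (hd (fst h)) \<le> sum ?f UNIV"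
      by (rule member_le_sum) (use nnlD[OF mu, where h=h] tpos pit_nn b0 in \<open>auto intro!: sum_nonneg mult_nonneg_nonneg simp: less_imp_le\<close>)
    then show "?K (a0, h) \<le> sum ?f UNIV" by simp
  qed
  also have "\<dots> = (\<Sum>a0\<in>Act M. \<Sum>s1\<in>UNIV. \<Sum>h\<in>Hset M t. \<Sum>i\<in>UNIV.
        \<beta> ^ Suc t * \<mu> a0 s1 h i * (Q s0 s1 * pit M s1 (fst h)))"
    by (intro sum.cong refl sum.swap)
  also have "\<dots> = \<beta> * (\<Sum>a0\<in>Act M. \<Sum>s1\<in>UNIV. Q s0 s1 * T t (\<mu> a0 s1) s1)"
    unfolding T_def by (simp add: sum_distrib_left mult_ac)
  finally show ?thesis .
qed

lemma asm_Lambda: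
  assumes l: "l \<in> Pos" and mu: "\<And>a s1. \<mu> a s1 \<in> Lambda M s1"
  shows "asm l \<mu> s0 \<in> Lambda M s0"
proof -
  have nn: "nnl (\<mu> a s1)" and sm: "summable (\<lambda>t. T t (\<mu> a s1) s1)" for a s1 using mu Lambda_iff by auto
  have nnA: "nnl (asm l \<mu> s0)" by (rule asm_nnl[OF l nn])
  have "summable (\<lambda>t. T (Suc t) (asm l \<mu> s0) s0)"
  proof (rule summable_comparison_test'[where N=0])
    show "summable (\<lambda>t. \<beta> * (\<Sum>a0\<in>Act M. \<Sum>s1\<in>UNIV. Q s0 s1 * T t (\<mu> a0 s1) s1))"
      by (intro summable_mult summable_sum sm)
    show "norm (T (Suc t) (asm l \<mu> s0) s0) \<le> \<beta> * (\<Sum>a0\<in>Act M. \<Sum>s1\<in>UNIV. Q s0 s1 * T t (\<mu> a0 s1) s1)" for t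
      using T_asm[OF l nn] T_nn[OF nnA] by simp
  qed
  then show ?thesis using nnA Lambda_iff summable_Suc_iff by blast
qed

lemma lam0_asm: "lam0 (asm l \<mu> s0) s0 = l"
  unfolding lam0_def asm_def by (simp add: vec_lambda_eta)

lemma lsh_asm: "ss \<noteq> [] \<Longrightarrow> hd ss = s1 \<Longrightarrow> lsh (asm l \<mu> s0) s0 a0 (ss, as) = \<mu> a0 s1 (ss, as)"
  unfolding lsh_def asm_def by (auto intro!: ext)

lemma D_le_Bell:
  assumes x0: "x0 \<in> Xs M" and g: "\<gamma> \<in> Pos"
  shows "Dval M \<gamma> x0 s0 \<le> Bell M (Dval M) \<gamma> x0 s0"
proof (rule Bell_ge)
  fix l :: "real^'i" assume l: "l \<in> Pos"
  have gl: "\<gamma> + l \<in> Pos" by (rule Pos_add[OF g l])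
  show "Dval M \<gamma> x0 s0 \<le> Psi (Dval M) \<gamma> x0 s0 l"
  proof (rule field_le_epsilon)
    fix e :: real assume e: "0 < e"
    have "\<forall>a s1. \<exists>m. m \<in> Lambda M s1 \<and> (a \<in> Act M \<longrightarrow>
        W m (\<gamma> + l) (zeta M x0 a s0) s1 < Dval M (\<gamma> + l) (zeta M x0 a s0) s1 + e)"
    proof (intro allI)
      fix a s1
      show "\<exists>m. m \<in> Lambda M s1 \<and> (a \<in> Act M \<longrightarrow>
        W m (\<gamma> + l) (zeta M x0 a s0) s1 < Dval M (\<gamma> + l) (zeta M x0 a s0) s1 + e)"
      proof (cases "a \<in> Act M")
        case True
        have x1: "zeta M x0 a s0 \<in> Xs M" using zX[OF x0 True] .
        have "Dval M (\<gamma> + l) (zeta M x0 a s0) s1 < Dval M (\<gamma> + l) (zeta M x0 a s0) s1 + e" using e by simp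
        then obtain m where "m \<in> Lambda M s1" "W m (\<gamma> + l) (zeta M x0 a s0) s1 < Dval M (\<gamma> + l) (zeta M x0 a s0) s1 + e"
          unfolding D_eq[where \<gamma>="\<gamma> + l" and x="zeta M x0 a s0" and s=s1]
          by (subst (asm) cINF_less_iff[OF Lambda_ne]) (auto intro!: bdd_belowI2[where m="- lb (\<gamma> + l)"] W_lb x1 gl)
        then show ?thesis by blast
      next
        case False then show ?thesis using Lambda_zero by blast
      qed
    qed
    then obtain \<mu> where mu: "\<And>a s1. \<mu> a s1 \<in> Lambda M s1"
      "\<And>a s1. a \<in> Act M \<Longrightarrow> W (\<mu> a s1) (\<gamma> + l) (zeta M x0 a s0) s1 < Dval M (\<gamma> + l) (zeta M x0 a s0) s1 + e"
      by metis
    define lamA where "lamA = asm l \<mu> s0"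
    have lamA: "lamA \<in> Lambda M s0" unfolding lamA_def by (rule asm_Lambda[OF l mu(1)])
    have "Dval M \<gamma> x0 s0 \<le> W lamA \<gamma> x0 s0" by (rule D_le_W[OF x0 g lamA])
    also have "\<dots> \<le> Psi (Dval M) \<gamma> x0 s0 l + \<beta> * e"
    proof (rule W_le[OF x0])
      fix a assume adm: "adm M x0 a"
      let ?a0 = "a [s0]" let ?x1 = "zeta M x0 (a [s0]) s0"
      have a0A: "?a0 \<in> Act M" using adm_act[OF adm] by simp
      have x1: "?x1 \<in> Xs M" using zX[OF x0 a0A] .
      have "Lag M a lamA \<gamma> x0 s0 = stage x0 ?a0 s0 \<gamma> l +
          \<beta> * (\<Sum>s1\<in>UNIV. Q s0 s1 * Lag M (ash a s0) (lsh lamA s0 ?a0) (\<gamma> + l) ?x1 s1)"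
        using DEC[OF adm x0 lamA, of \<gamma>] unfolding lamA_def lam0_asm .
      also have "\<dots> = stage x0 ?a0 s0 \<gamma> l +
          \<beta> * (\<Sum>s1\<in>UNIV. Q s0 s1 * Lag M (ash a s0) (\<mu> ?a0 s1) (\<gamma> + l) ?x1 s1)"
        unfolding lamA_def
        by (intro arg_cong2[where f="(+)"] arg_cong2[where f="(*)"] refl sum.cong Lag_cong_lam lsh_asm) auto
      also have "\<dots> \<le> stage x0 ?a0 s0 \<gamma> l +
          \<beta> * (\<Sum>s1\<in>UNIV. Q s0 s1 * (Dval M (\<gamma> + l) ?x1 s1 + e))"
      proof (intro add_left_mono mult_left_mono sum_mono)
        fix s1
        have "Lag M (ash a s0) (\<mu> ?a0 s1) (\<gamma> + l) ?x1 s1 \<le> W (\<mu> ?a0 s1) (\<gamma> + l) ?x1 s1"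
          by (rule Lag_le_W[OF adm_shift[OF adm] x1 mu(1)])
        also have "\<dots> \<le> Dval M (\<gamma> + l) ?x1 s1 + e" using mu(2)[OF a0A, of s1] by simp
        finally show "Lag M (ash a s0) (\<mu> ?a0 s1) (\<gamma> + l) ?x1 s1 \<le> Dval M (\<gamma> + l) ?x1 s1 + e" .
        show "0 \<le> Q s0 s1" using tpos[of s0 s1] by simp
      qed (use b0 in simp)
      also have "\<dots> = stage x0 ?a0 s0 \<gamma> l + \<beta> * (\<Sum>s1\<in>UNIV. Q s0 s1 * Dval M (\<gamma> + l) ?x1 s1) + \<beta> * e"
        by (simp add: distrib_left sum.distrib sum_distrib_right[symmetric] tsum)
      also have "\<dots> \<le> Psi (Dval M) \<gamma> x0 s0 l + \<beta> * e"
        using Psi_ge[OF adm_Aset[OF adm], where \<gamma>=\<gamma> and l=l and F="Dval M"] by simp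
      finally show "Lag M a lamA \<gamma> x0 s0 \<le> Psi (Dval M) \<gamma> x0 s0 l + \<beta> * e" .
    qed
    also have "\<dots> \<le> Psi (Dval M) \<gamma> x0 s0 l + e" using b1 e by (simp add: mult_less_cancel_right2 less_imp_le)
    finally show "Dval M \<gamma> x0 s0 \<le> Psi (Dval M) \<gamma> x0 s0 l + e" .
  qed
qed

end

lemma conv_zero:
  fixes T :: "nat \<Rightarrow> real" and b :: real
  assumes T: "summable T" "\<And>k. 0 \<le> T k" and b: "0 < b" "b < 1"
  shows "(\<lambda>n. \<Sum>k<n. b ^ (n - k) * T k) \<longlonglongrightarrow> 0"
proof -
  have s1: "summable (\<lambda>k. norm (T k))" using T by simp
  have s2: "summable (\<lambda>k. norm (b ^ k))"
  proof -
    have "norm (b ^ k) = b ^ k" for k using b by simp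
    then show ?thesis using b by (simp add: summable_geometric)
  qed
  have "(\<lambda>m. \<Sum>i\<le>m. T i * b ^ (m - i)) sums ((\<Sum>k. T k) * (\<Sum>k. b ^ k))"
    by (rule Cauchy_product_sums[OF s1 s2])
  then have "(\<lambda>m. \<Sum>i\<le>m. T i * b ^ (m - i)) \<longlonglongrightarrow> 0"
    using summable_LIMSEQ_zero sums_summable by blast
  then have lim: "(\<lambda>m. b * (\<Sum>i\<le>m. T i * b ^ (m - i))) \<longlonglongrightarrow> 0"
    by (rule tendsto_mult_right_zero)
  have eq: "b * (\<Sum>i\<le>m. T i * b ^ (m - i)) = (\<Sum>k<Suc m. b ^ (Suc m - k) * T k)" for m
    unfolding lessThan_Suc_atMost sum_distrib_left
    by (intro sum.cong refl) (simp add: Suc_diff_le mult_ac)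
  have "(\<lambda>m. \<Sum>k<Suc m. b ^ (Suc m - k) * T k) \<longlonglongrightarrow> 0"
    using lim unfolding eq .
  then show ?thesis by (rule LIMSEQ_imp_Suc)
qed

lemma base_aux: "(f::real) \<le> A * L \<Longrightarrow> - b \<le> w \<Longrightarrow> b \<le> A * L \<Longrightarrow> p = 2 * L * A \<Longrightarrow> f - w \<le> p"
proof -
  assume a: "f \<le> A * L" "- b \<le> w" "b \<le> A * L" "p = 2 * L * A"
  have "2 * L * A = A * L + A * L" by (simp add: algebra_simps)
  then show ?thesis using a by linarith
qed

context ctx begin

definition LL where "LL = Lconst M"

lemma LL_eq: "LL = (Cr + (\<Sum>i\<in>UNIV. Cg i)) / (1 - \<beta>)"
  unfolding LL_def Lconst_def Cr_def Cg_def ..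

lemma LL_nn: "x \<in> Xs M \<Longrightarrow> 0 \<le> LL"
  unfolding LL_eq using Cr_nn Cg_nn b1 by (intro divide_nonneg_pos add_nonneg_nonneg sum_nonneg) auto

lemma Pos_nn: "\<gamma> \<in> Pos \<Longrightarrow> 0 \<le> \<gamma> $ i"
  unfolding Pos_def by auto

lemma lb_le: assumes "x \<in> Xs M" "\<gamma> \<in> Pos" "\<And>i. \<gamma> $ i \<le> c" "0 \<le> c"
  shows "lb \<gamma> \<le> (1 + c) * LL"
proof -
  have "(\<Sum>i\<in>UNIV. \<gamma> $ i * Cg i) \<le> (\<Sum>i\<in>UNIV. c * Cg i)"
    using assms Cg_nn by (intro sum_mono mult_right_mono) auto
  also have "\<dots> = c * (\<Sum>i\<in>UNIV. Cg i)" by (simp add: sum_distrib_left)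
  finally have s1: "(\<Sum>i\<in>UNIV. \<gamma> $ i * Cg i) \<le> c * (\<Sum>i\<in>UNIV. Cg i)" .
  have n1: "0 \<le> c * Cr" using Cr_nn[OF assms(1)] assms(4) by simp
  have n2: "0 \<le> (\<Sum>i\<in>UNIV. Cg i)" using Cg_nn[OF assms(1)] by (simp add: sum_nonneg)
  have e: "(1 + c) * (Cr + (\<Sum>i\<in>UNIV. Cg i)) = Cr + c * (\<Sum>i\<in>UNIV. Cg i) + ((\<Sum>i\<in>UNIV. Cg i) + c * Cr)"
    by (simp add: algebra_simps)
  have "Cr + (\<Sum>i\<in>UNIV. \<gamma> $ i * Cg i) \<le> (1 + c) * (Cr + (\<Sum>i\<in>UNIV. Cg i))"
    unfolding e using s1 n1 n2 by linarith
  then show ?thesis unfolding lb_def LL_eq using b1 by (simp add: divide_right_mono)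
qed

lemma lb_le_sum: assumes "x \<in> Xs M" "\<gamma> \<in> Pos"
  shows "lb \<gamma> \<le> (1 + (\<Sum>i\<in>UNIV. \<gamma> $ i)) * LL"
proof (rule lb_le[OF assms])
  show "\<gamma> $ i \<le> (\<Sum>i\<in>UNIV. \<gamma> $ i)" for i
    by (rule member_le_sum) (use Pos_nn[OF assms(2)] in auto)
  show "0 \<le> (\<Sum>i\<in>UNIV. \<gamma> $ i)" using Pos_nn[OF assms(2)] by (simp add: sum_nonneg)
qed

definition Phi where
  "Phi n lam \<gamma> s = 2 * LL * (\<beta> ^ n * (1 + (\<Sum>i\<in>UNIV. \<gamma> $ i)) + (\<Sum>k<n. \<beta> ^ (n - k) * T k lam s))"

lemma Phi_step:
  assumes nn: "nnl lam" and a0: "a0 \<in> Act M" and LLn: "0 \<le> LL"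
  shows "\<beta> * (\<Sum>s1\<in>UNIV. Q s0 s1 * Phi n (lsh lam s0 a0) (\<gamma> + lam0 lam s0) s1) \<le> Phi (Suc n) lam \<gamma> s0"
proof -
  let ?l' = "lsh lam s0 a0"
  let ?A = "1 + (\<Sum>i\<in>UNIV. \<gamma> $ i)" let ?S = "\<Sum>i\<in>UNIV. lam ([s0], []) i"
  have sg: "(\<Sum>i\<in>UNIV. (\<gamma> + lam0 lam s0) $ i) = (\<Sum>i\<in>UNIV. \<gamma> $ i) + ?S"
    by (simp add: sum.distrib)
  have "(\<Sum>s1\<in>UNIV. Q s0 s1 * Phi n ?l' (\<gamma> + lam0 lam s0) s1) =
     (\<Sum>s1\<in>UNIV. Q s0 s1 * (2 * LL * (\<beta> ^ n * (?A + ?S)))) +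
     (\<Sum>s1\<in>UNIV. \<Sum>k<n. 2 * LL * (\<beta> ^ (n - k) * (Q s0 s1 * T k ?l' s1)))"
    unfolding Phi_def sg by (simp add: distrib_left sum.distrib sum_distrib_left mult_ac)
  also have "(\<Sum>s1\<in>UNIV. Q s0 s1 * (2 * LL * (\<beta> ^ n * (?A + ?S)))) = 2 * LL * (\<beta> ^ n * (?A + ?S))"
    by (simp add: sum_distrib_right[symmetric] tsum)
  also have "(\<Sum>s1\<in>UNIV. \<Sum>k<n. 2 * LL * (\<beta> ^ (n - k) * (Q s0 s1 * T k ?l' s1))) =
      (\<Sum>k<n. 2 * LL * (\<beta> ^ (n - k) * (\<Sum>s1\<in>UNIV. Q s0 s1 * T k ?l' s1)))"
    by (subst sum.swap) (simp add: sum_distrib_left)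
  finally have e: "\<beta> * (\<Sum>s1\<in>UNIV. Q s0 s1 * Phi n ?l' (\<gamma> + lam0 lam s0) s1) =
      2 * LL * (\<beta> ^ Suc n * ?A + \<beta> ^ Suc n * ?S + (\<Sum>k<n. \<beta> ^ (n - k) * (\<beta> * (\<Sum>s1\<in>UNIV. Q s0 s1 * T k ?l' s1))))"
    by (simp add: distrib_left sum_distrib_left mult_ac)
  have "\<beta> ^ Suc n * ?S \<le> \<beta> ^ Suc n * T 0 lam s0"
    using T0_ge[OF nn, of s0] b0 by (simp add: mult_left_mono)
  moreover have "(\<Sum>k<n. \<beta> ^ (n - k) * (\<beta> * (\<Sum>s1\<in>UNIV. Q s0 s1 * T k ?l' s1))) \<le> (\<Sum>k<n. \<beta> ^ (n - k) * T (Suc k) lam s0)"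
    using T_shift[OF nn a0] b0 by (intro sum_mono mult_left_mono) auto
  ultimately have "\<beta> * (\<Sum>s1\<in>UNIV. Q s0 s1 * Phi n ?l' (\<gamma> + lam0 lam s0) s1) \<le>
      2 * LL * (\<beta> ^ Suc n * ?A + (\<beta> ^ Suc n * T 0 lam s0 + (\<Sum>k<n. \<beta> ^ (n - k) * T (Suc k) lam s0)))"
    unfolding e using LLn by (intro mult_left_mono) auto
  also have "\<beta> ^ Suc n * T 0 lam s0 + (\<Sum>k<n. \<beta> ^ (n - k) * T (Suc k) lam s0) = (\<Sum>k<Suc n. \<beta> ^ (Suc n - k) * T k lam s0)"
    by (subst sum.lessThan_Suc_shift) simp
  finally show ?thesis unfolding Phi_def by simp
qed

lemma F_le_D:
  assumes LB: "LBP F"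
    and UB: "\<And>\<gamma> x s. \<gamma> \<in> Pos \<Longrightarrow> x \<in> Xs M \<Longrightarrow> F \<gamma> x s \<le> (1 + (\<Sum>i\<in>UNIV. \<gamma> $ i)) * LL"
    and FP: "\<And>\<gamma> x s. \<gamma> \<in> Pos \<Longrightarrow> x \<in> Xs M \<Longrightarrow> Bell M F \<gamma> x s = F \<gamma> x s"
    and x: "x \<in> Xs M" and g: "\<gamma> \<in> Pos"
  shows "F \<gamma> x s \<le> Dval M \<gamma> x s"
proof -
  have claim: "\<forall>s lam \<gamma> x. lam \<in> Lambda M s \<longrightarrow> \<gamma> \<in> Pos \<longrightarrow> x \<in> Xs M \<longrightarrow>
      F \<gamma> x s - W lam \<gamma> x s \<le> Phi n lam \<gamma> s" for n
  proof (induction n)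
    case 0
    show ?case
    proof (intro allI impI)
      fix s lam and \<gamma> :: "real^'i" and x assume lam: "lam \<in> Lambda M s" and g: "\<gamma> \<in> Pos" and x: "x \<in> Xs M"
      have "F \<gamma> x s \<le> (1 + (\<Sum>i\<in>UNIV. \<gamma> $ i)) * LL" by (rule UB[OF g x])
      moreover have "- lb \<gamma> \<le> W lam \<gamma> x s" by (rule W_lb[OF x g lam])
      moreover have "lb \<gamma> \<le> (1 + (\<Sum>i\<in>UNIV. \<gamma> $ i)) * LL" by (rule lb_le_sum[OF x g])
      moreover have "Phi 0 lam \<gamma> s = 2 * LL * (1 + (\<Sum>i\<in>UNIV. \<gamma> $ i))"
        by (simp add: Phi_def)
      ultimately show "F \<gamma> x s - W lam \<gamma> x s \<le> Phi 0 lam \<gamma> s" using base_aux by metis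
    qed
  next
    case (Suc n)
    show ?case
    proof (intro allI impI)
      fix s0 lam and \<gamma> :: "real^'i" and x0 assume lam: "lam \<in> Lambda M s0" and g: "\<gamma> \<in> Pos" and x0: "x0 \<in> Xs M"
      have nn: "nnl lam" using lam Lambda_iff by auto
      let ?l = "lam0 lam s0"
      have l: "?l \<in> Pos" by (rule lam0_Pos[OF nn])
      have "F \<gamma> x0 s0 = Bell M F \<gamma> x0 s0" using FP[OF g x0] by simp
      also have "\<dots> \<le> Psi F \<gamma> x0 s0 ?l" by (rule Bell_le_Psi[OF LB x0 g l])
      also have "\<dots> \<le> W lam \<gamma> x0 s0 + Phi (Suc n) lam \<gamma> s0"
      proof (rule Psi_le[OF x0])
        fix a0 assume a0: "a0 \<in> Aset x0 s0"
        have a0A: "a0 \<in> Act M" using Aset_D[OF a0] by simp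
        have x1: "zeta M x0 a0 s0 \<in> Xs M" using zX[OF x0 a0A] .
        let ?l' = "lsh lam s0 a0"
        have "F (\<gamma> + ?l) (zeta M x0 a0 s0) s1 \<le> W ?l' (\<gamma> + ?l) (zeta M x0 a0 s0) s1 + Phi n ?l' (\<gamma> + ?l) s1" for s1
          using Suc.IH lsh_Lambda[OF lam a0A] Pos_add[OF g l] x1 by (smt (verit))
        then have "stage x0 a0 s0 \<gamma> ?l + \<beta> * (\<Sum>s'\<in>UNIV. Q s0 s' * F (\<gamma> + ?l) (zeta M x0 a0 s0) s')
            \<le> stage x0 a0 s0 \<gamma> ?l + \<beta> * (\<Sum>s'\<in>UNIV. Q s0 s' * (W ?l' (\<gamma> + ?l) (zeta M x0 a0 s0) s' + Phi n ?l' (\<gamma> + ?l) s'))"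
          using b0 tpos by (intro add_left_mono mult_left_mono sum_mono) (auto simp: less_imp_le)
        also have "\<dots> = (stage x0 a0 s0 \<gamma> ?l + \<beta> * (\<Sum>s'\<in>UNIV. Q s0 s' * W ?l' (\<gamma> + ?l) (zeta M x0 a0 s0) s'))
            + \<beta> * (\<Sum>s'\<in>UNIV. Q s0 s' * Phi n ?l' (\<gamma> + ?l) s')"
          by (simp add: distrib_left sum.distrib)
        also have "\<dots> \<le> W lam \<gamma> x0 s0 + Phi (Suc n) lam \<gamma> s0"
          by (rule add_mono[OF KW[OF lam x0 a0] Phi_step[OF nn a0A LL_nn[OF x0]]])
        finally show "stage x0 a0 s0 \<gamma> ?l + \<beta> * (\<Sum>s'\<in>UNIV. Q s0 s' * F (\<gamma> + ?l) (zeta M x0 a0 s0) s')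
            \<le> W lam \<gamma> x0 s0 + Phi (Suc n) lam \<gamma> s0" .
      qed
      finally show "F \<gamma> x0 s0 - W lam \<gamma> x0 s0 \<le> Phi (Suc n) lam \<gamma> s0" by simp
    qed
  qed
  show ?thesis
  proof (rule D_ge)
    fix lam assume lam: "lam \<in> Lambda M s"
    have nn: "nnl lam" and sm: "summable (\<lambda>t. T t lam s)" using lam Lambda_iff by auto
    have "(\<lambda>n. Phi n lam \<gamma> s) \<longlonglongrightarrow> 2 * LL * (0 * (1 + (\<Sum>i\<in>UNIV. \<gamma> $ i)) + 0)"
      unfolding Phi_def
      by (intro tendsto_intros conv_zero[OF sm T_nn[OF nn] b0 b1] LIMSEQ_power_zero) (use b0 b1 in auto)
    then have "F \<gamma> x s - W lam \<gamma> x s \<le> 0"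
      by (intro LIMSEQ_le_const[where X="\<lambda>n. Phi n lam \<gamma> s"]) (use claim lam g x in auto)
    then show "F \<gamma> x s \<le> W lam \<gamma> x s" by simp
  qed
qed

end

lemma summable_sucpow: "summable (\<lambda>k. real (Suc k) * (1/2::real) ^ k)"
proof -
  have s: "summable (\<lambda>k. norm ((1/2::real) ^ k))" by (simp add: summable_geometric)
  have "(\<lambda>k. \<Sum>i\<le>k. (1/2::real) ^ i * (1/2) ^ (k - i)) sums ((\<Sum>k. (1/2::real) ^ k) * (\<Sum>k. (1/2) ^ k))"
    by (rule Cauchy_product_sums[OF s s])
  moreover have "(\<Sum>i\<le>k. (1/2::real) ^ i * (1/2) ^ (k - i)) = real (Suc k) * (1/2::real) ^ k" for k
  proof -
    have "(\<Sum>i\<le>k. (1/2::real) ^ i * (1/2) ^ (k - i)) = (\<Sum>i\<le>k. (1/2::real) ^ k)"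
      by (intro sum.cong refl) (simp add: power_add[symmetric])
    then show ?thesis by simp
  qed
  ultimately show ?thesis using sums_summable by simp
qed

context ctx begin

lemma D_upper: assumes x: "x \<in> Xs M" and g: "\<gamma> \<in> Pos" shows "Dval M \<gamma> x s \<le> lb \<gamma>"
proof -
  have "Dval M \<gamma> x s \<le> W (\<lambda>_ _. 0) \<gamma> x s" by (rule D_le_W[OF x g Lambda_zero])
  also have "\<dots> \<le> lb \<gamma>"
  proof (rule W_le[OF x])
    fix a assume adm: "adm M x a"
    have "(\<Sum>i\<in>UNIV. \<gamma> $ i * Vg i a x s) \<le> (\<Sum>i\<in>UNIV. \<gamma> $ i * (Cg i / (1 - \<beta>)))"
      using Vg_bound[OF adm x] Pos_nn[OF g] by (intro sum_mono mult_left_mono) (auto simp: abs_le_iff)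
    moreover have "Vr a x s \<le> Cr / (1 - \<beta>)" using Vr_bound[OF adm x, of s] by simp
    ultimately have "Vr a x s + (\<Sum>i\<in>UNIV. \<gamma> $ i * Vg i a x s) \<le> lb \<gamma>"
      unfolding lb_def by (simp add: add_divide_distrib sum_divide_distrib)
    then show "Lag M a (\<lambda>_ _. 0) \<gamma> x s \<le> lb \<gamma>"
      using Lag_split[OF adm x Lambda_zero, of \<gamma>] PP_zero by simp
  qed
  finally show ?thesis .
qed

lemma D_lower: "x \<in> Xs M \<Longrightarrow> \<gamma> \<in> Pos \<Longrightarrow> - lb \<gamma> \<le> Dval M \<gamma> x s"
  by (rule D_ge) (rule W_lb)

lemma Bk_D: "\<gamma> \<in> Bk k \<Longrightarrow> \<gamma> \<in> Pos \<and> (\<forall>i. \<gamma> $ i \<le> real k)"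
  unfolding Bk_def by simp

lemma zero_Bk: "0 \<in> Bk k"
  unfolding Bk_def Pos_def by simp

lemma D_Bk: assumes x: "x \<in> Xs M" and g: "\<gamma> \<in> Bk k" shows "\<bar>Dval M \<gamma> x s\<bar> \<le> (1 + real k) * LL"
proof -
  have gp: "\<gamma> \<in> Pos" "\<And>i. \<gamma> $ i \<le> real k" using Bk_D[OF g] by auto
  have h: "lb \<gamma> \<le> (1 + real k) * LL" by (rule lb_le[OF x gp]) simp
  have u: "Dval M \<gamma> x s \<le> lb \<gamma>" by (rule D_upper[OF x gp(1)])
  have l: "- lb \<gamma> \<le> Dval M \<gamma> x s" by (rule D_lower[OF x gp(1)])
  show ?thesis unfolding abs_le_iff using h u l by linarith
qed

lemma normk_bounds: assumes x: "x \<in> Xs M"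
  shows "0 \<le> normk (Dval M) x s k" "normk (Dval M) x s k \<le> (1 + real k) * LL"
proof -
  have bd: "bdd_above ((\<lambda>\<gamma>. \<bar>Dval M \<gamma> x s\<bar>) ` Bk k)"
    by (rule bdd_aboveI2[where M="(1 + real k) * LL"]) (rule D_Bk[OF x])
  have "\<bar>Dval M 0 x s\<bar> \<le> normk (Dval M) x s k"
    unfolding normk_def by (rule cSUP_upper[OF zero_Bk bd])
  then show "0 \<le> normk (Dval M) x s k" by linarith
  show "normk (Dval M) x s k \<le> (1 + real k) * LL"
    unfolding normk_def
  proof (rule cSUP_least)
    show "Bk k \<noteq> {}" using zero_Bk by blast
    fix \<gamma> :: "real^'i" assume "\<gamma> \<in> Bk k"
    then show "\<bar>Dval M \<gamma> x s\<bar> \<le> (1 + real k) * LL" by (rule D_Bk[OF x])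
  qed
qed

lemma term_bound: assumes x: "x \<in> Xs M"
  shows "0 \<le> (1/2) ^ Suc k * normk (Dval M) x s (Suc k)"
    "(1/2) ^ Suc k * normk (Dval M) x s (Suc k) \<le> LL * (real (Suc k) * (1/2) ^ k)"
proof -
  show "0 \<le> (1/2) ^ Suc k * normk (Dval M) x s (Suc k)" using normk_bounds(1)[OF x] by simp
  have "(1/2::real) ^ Suc k * normk (Dval M) x s (Suc k) \<le> (1/2) ^ Suc k * ((1 + real (Suc k)) * LL)"
    by (rule mult_left_mono[OF normk_bounds(2)[OF x]]) simp
  also have "\<dots> = LL * ((1 + real (Suc k)) / 2 * (1/2) ^ k)" by (simp add: field_simps)
  also have "\<dots> \<le> LL * (real (Suc k) * (1/2) ^ k)"
    by (rule mult_left_mono[OF _ LL_nn[OF x]]) (simp add: field_simps)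
  finally show "(1/2) ^ Suc k * normk (Dval M) x s (Suc k) \<le> LL * (real (Suc k) * (1/2) ^ k)" .
qed

lemma D_inM:
  assumes inj: "inj_on xidx (Xs M)"
  shows "inM M xidx (Dval M)"
  unfolding inM_def
proof (intro conjI ballI allI impI)
  fix x s k assume x: "x \<in> Xs M"
  show "bounded ((\<lambda>\<gamma>. Dval M \<gamma> x s) ` Bk k)"
    unfolding bounded_iff using D_Bk[OF x] by auto
next
  fix x s assume x: "x \<in> Xs M"
  show "summable (\<lambda>k. (1/2) ^ Suc k * normk (Dval M) x s (Suc k))"
    by (rule summable_comparison_test'[where N=0, OF summable_mult[OF summable_sucpow, of LL]])
       (use term_bound[OF x] in auto)
next
  fix s
  let ?S = "\<lambda>x. \<Sum>k. (1/2) ^ Suc k * normk (Dval M) x s (Suc k)"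
  let ?B = "\<Sum>k. LL * (real (Suc k) * (1/2::real) ^ k)"
  have Sb: "0 \<le> ?S x \<and> ?S x \<le> ?B" if x: "x \<in> Xs M" for x
  proof
    have sm: "summable (\<lambda>k. (1/2) ^ Suc k * normk (Dval M) x s (Suc k))"
      by (rule summable_comparison_test'[where N=0, OF summable_mult[OF summable_sucpow, of LL]])
         (use term_bound[OF x] in auto)
    show "0 \<le> ?S x" by (rule suminf_nonneg[OF sm]) (use term_bound[OF x] in auto)
    show "?S x \<le> ?B" by (rule suminf_le[OF _ sm summable_mult[OF summable_sucpow]]) (use term_bound[OF x] in auto)
  qed
  have "(\<lambda>n::nat. (1/2::real) ^ n) summable_on UNIV"
    by (rule norm_summable_imp_summable_on) (simp add: summable_geometric)
  then have "(\<lambda>n::nat. (1/2::real) ^ n) summable_on xidx ` Xs M"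
    by (rule summable_on_subset_banach) simp
  then have "(\<lambda>x. (1/2::real) ^ xidx x) summable_on Xs M"
    using summable_on_reindex[OF inj, of "\<lambda>n. (1/2::real) ^ n"] by (simp add: comp_def)
  then have "(\<lambda>x. ?B * (1/2::real) ^ xidx x) summable_on Xs M"
    by (rule summable_on_cmult_right)
  then show "(\<lambda>x. (1/2) ^ xidx x * ?S x) summable_on Xs M"
  proof (rule summable_on_comparison_test)
    fix x assume x: "x \<in> Xs M"
    show "(1/2) ^ xidx x * ?S x \<le> ?B * (1/2) ^ xidx x"
      using Sb[OF x] by (simp add: mult.commute mult_left_mono)
    show "0 \<le> (1/2) ^ xidx x * ?S x" using Sb[OF x] by simp
  qed
qed

lemma convex_Pos: "convex (Pos :: (real^'i) set)"
  unfolding convex_def Pos_def by auto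

lemma D_convex: assumes x: "x \<in> Xs M" shows "convex_on Pos (\<lambda>\<gamma>. Dval M \<gamma> x s)"
  unfolding convex_on_def
proof (intro conjI convex_Pos ballI allI impI)
  fix \<gamma>1 \<gamma>2 :: "real^'i" and u v :: real
  assume g1: "\<gamma>1 \<in> Pos" and g2: "\<gamma>2 \<in> Pos" and u: "0 \<le> u" and v: "0 \<le> v" and uv: "u + v = 1"
  let ?g = "u *\<^sub>R \<gamma>1 + v *\<^sub>R \<gamma>2"
  have g: "?g \<in> Pos" using g1 g2 u v unfolding Pos_def by auto
  show "Dval M ?g x s \<le> u * Dval M \<gamma>1 x s + v * Dval M \<gamma>2 x s"
  proof (rule field_le_epsilon)
    fix e :: real assume e: "0 < e"
    have ex: "\<exists>l\<in>Lambda M s. W l \<gamma>' x s < Dval M \<gamma>' x s + e" if g': "\<gamma>' \<in> Pos" for \<gamma>'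
    proof -
      have "Dval M \<gamma>' x s < Dval M \<gamma>' x s + e" using e by simp
      then show ?thesis unfolding D_eq[where \<gamma>=\<gamma>' and x=x and s=s]
        by (subst (asm) cINF_less_iff[OF Lambda_ne]) (auto intro!: bdd_belowI2[where m="- lb \<gamma>'"] W_lb x g')
    qed
    obtain l1 where l1: "l1 \<in> Lambda M s" "W l1 \<gamma>1 x s < Dval M \<gamma>1 x s + e" using ex[OF g1] by blast
    obtain l2 where l2: "l2 \<in> Lambda M s" "W l2 \<gamma>2 x s < Dval M \<gamma>2 x s + e" using ex[OF g2] by blast
    let ?l = "\<lambda>h i. u * l1 h i + v * l2 h i"
    have l: "?l \<in> Lambda M s" by (rule Lambda_comb[OF l1(1) l2(1) u v])
    have "Dval M ?g x s \<le> W ?l ?g x s" by (rule D_le_W[OF x g l])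
    also have "\<dots> \<le> u * W l1 \<gamma>1 x s + v * W l2 \<gamma>2 x s"
    proof (rule W_le[OF x])
      fix a assume adm: "adm M x a"
      have "Lag M a ?l ?g x s = Vr a x s + (\<Sum>i\<in>UNIV. ?g $ i * Vg i a x s) + PP a ?l x s"
        by (rule Lag_split[OF adm x l])
      also have "\<dots> = u * (Vr a x s + (\<Sum>i\<in>UNIV. \<gamma>1 $ i * Vg i a x s) + PP a l1 x s) +
          v * (Vr a x s + (\<Sum>i\<in>UNIV. \<gamma>2 $ i * Vg i a x s) + PP a l2 x s)"
      proof -
        have "(\<Sum>i\<in>UNIV. ?g $ i * Vg i a x s) = u * (\<Sum>i\<in>UNIV. \<gamma>1 $ i * Vg i a x s) + v * (\<Sum>i\<in>UNIV. \<gamma>2 $ i * Vg i a x s)"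
          by (simp add: sum_distrib_left sum.distrib algebra_simps)
        moreover have "Vr a x s = u * Vr a x s + v * Vr a x s" using uv by (simp add: distrib_right[symmetric])
        ultimately show ?thesis unfolding PP_lin[OF adm x l1(1) l2(1)] by (simp add: algebra_simps)
      qed
      also have "\<dots> = u * Lag M a l1 \<gamma>1 x s + v * Lag M a l2 \<gamma>2 x s"
        using Lag_split[OF adm x l1(1), of \<gamma>1] Lag_split[OF adm x l2(1), of \<gamma>2] by simp
      also have "\<dots> \<le> u * W l1 \<gamma>1 x s + v * W l2 \<gamma>2 x s"
        by (intro add_mono mult_left_mono Lag_le_W[OF adm x] l1(1) l2(1) u v)
      finally show "Lag M a ?l ?g x s \<le> u * W l1 \<gamma>1 x s + v * W l2 \<gamma>2 x s" .
    qed
    also have "\<dots> \<le> u * (Dval M \<gamma>1 x s + e) + v * (Dval M \<gamma>2 x s + e)"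
      using l1(2) l2(2) u v by (intro add_mono mult_left_mono) auto
    also have "\<dots> = u * Dval M \<gamma>1 x s + v * Dval M \<gamma>2 x s + e"
      using uv by (simp add: algebra_simps) (metis distrib_left mult.right_neutral)
    finally show "Dval M ?g x s \<le> u * Dval M \<gamma>1 x s + v * Dval M \<gamma>2 x s + e" .
  qed
qed

lemma Cg_le_LL: "x \<in> Xs M \<Longrightarrow> Cg i / (1 - \<beta>) \<le> LL"
proof -
  assume x: "x \<in> Xs M"
  have "Cg i \<le> (\<Sum>i\<in>UNIV. Cg i)" by (rule member_le_sum) (use Cg_nn[OF x] in auto)
  then have "Cg i \<le> Cr + (\<Sum>i\<in>UNIV. Cg i)" using Cr_nn[OF x] by linarith
  then show ?thesis unfolding LL_eq using b1 by (simp add: divide_right_mono)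
qed

lemma D_lip1:
  assumes x: "x \<in> Xs M" and g1: "\<gamma>1 \<in> Pos" and g2: "\<gamma>2 \<in> Pos"
  shows "Dval M \<gamma>1 x s \<le> Dval M \<gamma>2 x s + LL * (\<Sum>i\<in>UNIV. \<bar>\<gamma>1 $ i - \<gamma>2 $ i\<bar>)"
proof -
  let ?c = "LL * (\<Sum>i\<in>UNIV. \<bar>\<gamma>1 $ i - \<gamma>2 $ i\<bar>)"
  have "Dval M \<gamma>1 x s - ?c \<le> Dval M \<gamma>2 x s"
  proof (rule D_ge)
    fix lam assume lam: "lam \<in> Lambda M s"
    have "W lam \<gamma>1 x s \<le> W lam \<gamma>2 x s + ?c"
    proof (rule W_le[OF x])
      fix a assume adm: "adm M x a"
      have "(\<Sum>i\<in>UNIV. \<gamma>1 $ i * Vg i a x s) - (\<Sum>i\<in>UNIV. \<gamma>2 $ i * Vg i a x s)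
          = (\<Sum>i\<in>UNIV. (\<gamma>1 $ i - \<gamma>2 $ i) * Vg i a x s)"
        by (simp add: sum_subtractf left_diff_distrib)
      also have "\<dots> \<le> (\<Sum>i\<in>UNIV. \<bar>\<gamma>1 $ i - \<gamma>2 $ i\<bar> * LL)"
      proof (rule sum_mono)
        fix i
        have "(\<gamma>1 $ i - \<gamma>2 $ i) * Vg i a x s \<le> \<bar>\<gamma>1 $ i - \<gamma>2 $ i\<bar> * \<bar>Vg i a x s\<bar>"
          by (metis abs_ge_self abs_mult)
        also have "\<dots> \<le> \<bar>\<gamma>1 $ i - \<gamma>2 $ i\<bar> * LL"
          using Vg_bound[OF adm x, of i s] Cg_le_LL[OF x, of i] by (intro mult_left_mono) auto
        finally show "(\<gamma>1 $ i - \<gamma>2 $ i) * Vg i a x s \<le> \<bar>\<gamma>1 $ i - \<gamma>2 $ i\<bar> * LL" .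
      qed
      finally have "(\<Sum>i\<in>UNIV. \<gamma>1 $ i * Vg i a x s) \<le> (\<Sum>i\<in>UNIV. \<gamma>2 $ i * Vg i a x s) + ?c"
        by (simp add: sum_distrib_left mult.commute)
      then have "Lag M a lam \<gamma>1 x s \<le> Lag M a lam \<gamma>2 x s + ?c"
        using Lag_split[OF adm x lam, of \<gamma>1] Lag_split[OF adm x lam, of \<gamma>2] by simp
      also have "\<dots> \<le> W lam \<gamma>2 x s + ?c" using Lag_le_W[OF adm x lam] by simp
      finally show "Lag M a lam \<gamma>1 x s \<le> W lam \<gamma>2 x s + ?c" .
    qed
    moreover have "Dval M \<gamma>1 x s \<le> W lam \<gamma>1 x s" by (rule D_le_W[OF x g1 lam])
    ultimately show "Dval M \<gamma>1 x s - ?c \<le> W lam \<gamma>2 x s" by linarith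
  qed
  then show ?thesis by linarith
qed

lemma D_inN:
  assumes inj: "inj_on xidx (Xs M)"
  shows "inN M xidx (Dval M)"
  unfolding inN_def
proof (intro conjI D_inM[OF inj] ballI allI impI)
  fix x s assume x: "x \<in> Xs M"
  show "convex_on Pos (\<lambda>\<gamma>. Dval M \<gamma> x s)" by (rule D_convex[OF x])
  fix \<gamma>1 \<gamma>2 :: "real^'i" assume g1: "\<gamma>1 \<in> Pos" and g2: "\<gamma>2 \<in> Pos"
  have "(\<Sum>i\<in>UNIV. \<bar>\<gamma>2 $ i - \<gamma>1 $ i\<bar>) = (\<Sum>i\<in>UNIV. \<bar>\<gamma>1 $ i - \<gamma>2 $ i\<bar>)"
    by (simp add: abs_minus_commute)
  then show "\<bar>Dval M \<gamma>1 x s - Dval M \<gamma>2 x s\<bar> \<le> Lconst M * (\<Sum>i\<in>UNIV. \<bar>\<gamma>1 $ i - \<gamma>2 $ i\<bar>)"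
    using D_lip1[OF x g1 g2, of s] D_lip1[OF x g2 g1, of s] unfolding LL_def by (simp add: abs_le_iff)
next
  fix x s a and \<gamma> :: "real^'i" assume x: "x \<in> Xs M" and f: "feasible M x s a" and g: "\<gamma> \<in> Pos"
  then show "condsum M [s] (stg M (rew M) a x) + (\<Sum>i\<in>UNIV. \<gamma> $ i * condsum M [s] (stg M (gcon M i) a x))
      \<le> Dval M \<gamma> x s"
    using D_LBP unfolding LBP_def Vr_def Vg_def by blast
next
  fix x s and \<gamma> :: "real^'i" assume x: "x \<in> Xs M" and g: "\<gamma> \<in> Pos"
  show "Dval M \<gamma> x s \<le> (1 + (\<Sum>i\<in>UNIV. \<gamma> $ i)) * Lconst M"
    using D_upper[OF x g, of s] lb_le_sum[OF x g] unfolding LL_def by linarith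
qed

lemma inN_LBP: "inN M xidx F \<Longrightarrow> LBP F"
  unfolding inN_def LBP_def Vr_def Vg_def by blast

lemma inN_UB: "inN M xidx F \<Longrightarrow> \<gamma> \<in> Pos \<Longrightarrow> x \<in> Xs M \<Longrightarrow> F \<gamma> x s \<le> (1 + (\<Sum>i\<in>UNIV. \<gamma> $ i)) * LL"
  unfolding inN_def LL_def by blast

end

theorem corollary4p6:
  fixes M :: "(real^'m, real^'n, 's::finite, 'i::finite) model"
    and xidx :: "real^'m \<Rightarrow> nat"
  assumes trans_pos: "\<forall>s s'. trP M s s' > 0"
    and trans_sum: "\<forall>s. (\<Sum>s'\<in>UNIV. trP M s s') = 1"
    and fin_A: "finite (Act M)"
    and cnt_X: "countable (Xs M)"
    and enum_X: "inj_on xidx (Xs M)" "\<forall>x\<in>Xs M. xidx x \<ge> 1"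
    and zeta_X: "\<forall>x\<in>Xs M. \<forall>a\<in>Act M. \<forall>s. zeta M x a s \<in> Xs M"
    and bnd_r: "\<exists>C. \<forall>x\<in>Xs M. \<forall>a\<in>Act M. \<forall>s. \<bar>rew M x a s\<bar> \<le> C"
    and bnd_g: "\<forall>i. \<exists>C. \<forall>x\<in>Xs M. \<forall>a\<in>Act M. \<forall>s. \<bar>gcon M i x a s\<bar> \<le> C"
    and beta: "0 < disc M" "disc M < 1"
    and feas: "\<forall>x\<in>Xs M. \<forall>s. \<exists>a. feasible M x s a"
  shows "inN M xidx (Dval M)
    \<and> (\<forall>\<gamma>\<in>Pos. \<forall>x\<in>Xs M. \<forall>s. Bell M (Dval M) \<gamma> x s = Dval M \<gamma> x s)
    \<and> (\<forall>F. inN M xidx F \<and> (\<forall>\<gamma>\<in>Pos. \<forall>x\<in>Xs M. \<forall>s. Bell M F \<gamma> x s = F \<gamma> x s)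
           \<longrightarrow> (\<forall>\<gamma>\<in>Pos. \<forall>x\<in>Xs M. \<forall>s. F \<gamma> x s \<le> Dval M \<gamma> x s))"
proof -
  interpret ctx M
    by unfold_locales (use assms in auto)
  show ?thesis
  proof (intro conjI ballI allI impI)
    show "inN M xidx (Dval M)" by (rule D_inN[OF enum_X(1)])
  next
    fix \<gamma> :: "real^'i" and x s assume g: "\<gamma> \<in> Pos" and x: "x \<in> Xs M"
    show "Bell M (Dval M) \<gamma> x s = Dval M \<gamma> x s"
      by (intro antisym Bell_D_le[OF x g] D_le_Bell[OF x g])
  next
    fix F :: "real^'i \<Rightarrow> real^'m \<Rightarrow> 's \<Rightarrow> real" and \<gamma> :: "real^'i" and x s
    assume h: "inN M xidx F \<and> (\<forall>\<gamma>\<in>Pos. \<forall>x\<in>Xs M. \<forall>s. Bell M F \<gamma> x s = F \<gamma> x s)"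
      and g: "\<gamma> \<in> Pos" and x: "x \<in> Xs M"
    show "F \<gamma> x s \<le> Dval M \<gamma> x s"
      by (rule F_le_D[OF inN_LBP[of xidx] inN_UB[of xidx] _ x g]) (use h in auto)
  qed
qed

end
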